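(* Let $n\ge4$ be even. The affine $n$-diagrams lying in $O_n$ and having at least one vertical edge are exactly the diagrams $[S_1,S_2,r(S_1,S_2)+w]$ with $t\in\{2,4,\dots,n\}$, $S_1,S_2\in\mathrm{Ann}(n)\cap I(t)$ and $w\in2\mathbb{Z}$, and distinct such triples $(S_1,S_2,w)$ give distinct diagrams.
   Context: An affine $n$-diagram consists of the nodes $\mathbb{Z}\times\{0,1\}\subset\mathbb{R}^2$ together with curves called edges such that: every node is an endpoint of exactly one edge; edges lie in $\mathbb{R}\times[0,1]$; an edge not joining two nodes is an infinite horizontal line meeting no node, and there are finitely many such; no two edges intersect; the diagram is invariant under horizontal translation by $n$. Diagrams are taken up to isotopy (equivalently drawn on a cylinder with nodes $1,\dots,n$, indices mod $n$, on a top and a bottom circle). An edge is vertical if it joins a top node to a bottom node. The number of intersections of a diagram with the line $x=i+\tfrac12$ means the minimum over isotopic representatives; a diagram lies in $O_n$ if this number is even for every $i\in\mathbb{Z}$ ($O_n$ being the span of such diagrams in the diagram algebra $D_n$). An involution $S$ of $\{1,\dots,n\}$ is annular if for each pair $i<j$ interchanged by $S$: $S(\{i,\dots,j\})=\{i,\dots,j\}$, and $\{i,\dots,j\}$ contains either no fixed point or all fixed points of $S$. $\mathrm{Ann}(n)$: annular involutions; $I(t)$: involutions with exactly $t$ fixed points. For a diagram $D$ with a vertical edge, $w_1(D)$ is the number of pairs $(i,j)\in\mathbb{Z}^2$, $i>j$, with bottom node $(j,0)$ joined to top node $(i,1)$ by an edge crossing $x=1/2$; $w_2(D)$ likewise with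 $i<j$; $w(D)=w_1(D)-w_2(D)$. The map $D\mapsto(S_1,S_2,w(D))$, with $S_1$ (resp. $S_2$) interchanging $i,j$ iff top (resp. bottom) nodes $i,j$ are joined, is a bijection from diagrams with a vertical edge onto triples with $S_1,S_2\in\mathrm{Ann}(n)\cap I(t)$, $t>0$, $w\in\mathbb{Z}$; $[S_1,S_2,w]$ denotes the corresponding diagram. $r(S_1,S_2)$ is the smallest nonnegative integer $r$ with $[S_1,S_2,r]$ in $O_n$. *)

theory Defs
  imports Main
begin

text \<open>Nodes of an affine diagram: (x, True) is the top node (x,1), (x, False) the bottom node (x,0).
  A diagram is represented up to isotopy by its matching of nodes together with the number
  of infinite horizontal lines.\<close>

type_synonym node = "int \<times> bool"
type_synonym diagram = "(node \<Rightarrow> node) \<times> nat"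

definition match :: "diagram \<Rightarrow> node \<Rightarrow> node" where
  "match D = fst D"

definition nlines :: "diagram \<Rightarrow> nat" where
  "nlines D = snd D"

text \<open>Linear order on the boundary of the strip, cut at the left end:
  bottom nodes from left to right, then top nodes from right to left.
  Two chords cross iff their endpoints interleave in this order.\<close>
fun bless :: "node \<Rightarrow> node \<Rightarrow> bool" where
  "bless (a, False) (b, False) = (a < b)"
| "bless (a, False) (b, True) = True"
| "bless (a, True) (b, False) = False"
| "bless (a, True) (b, True) = (b < a)"

definition has_vertical :: "diagram \<Rightarrow> bool" where
  "has_vertical D \<longleftrightarrow> (\<exists>x. snd (match D (x, False)) = True)"

definition is_affine_diagram :: "nat \<Rightarrow> diagram \<Rightarrow> bool" where
  "is_affine_diagram n D \<longleftrightarrow>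
     (\<forall>p. match D p \<noteq> p \<and> match D (match D p) = p) \<and>
     (\<forall>x s. match D (x + int n, s) =
              (fst (match D (x, s)) + int n, snd (match D (x, s)))) \<and>
     (\<forall>p q. bless p (match D p) \<and> bless q (match D q) \<longrightarrow>
            \<not> (bless p q \<and> bless q (match D p) \<and> bless (match D p) (match D q))) \<and>
     (nlines D > 0 \<longrightarrow> \<not> has_vertical D)"

text \<open>Minimal number of intersections with the line x = i + 1/2: every edge whose endpoints
  lie on different sides of the line (counted at its endpoint with smaller x-coordinate),
  plus every horizontal line.\<close>
definition cross_count :: "diagram \<Rightarrow> int \<Rightarrow> nat" where
  "cross_count D i = card {p. fst p \<le> i \<and> i < fst (match D p)} + nlines D"

definition in_O :: "diagram \<Rightarrow> bool" where
  "in_O D \<longleftrightarrow> (\<forall>i. even (cross_count D i))"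

definition invols :: "nat \<Rightarrow> (int \<Rightarrow> int) set" where
  "invols n = {S. (\<forall>x. x \<notin> {1..int n} \<longrightarrow> S x = x) \<and>
                  (\<forall>x\<in>{1..int n}. S x \<in> {1..int n} \<and> S (S x) = x)}"

definition fixpts :: "nat \<Rightarrow> (int \<Rightarrow> int) \<Rightarrow> int set" where
  "fixpts n S = {x \<in> {1..int n}. S x = x}"

definition Ann :: "nat \<Rightarrow> (int \<Rightarrow> int) set" where
  "Ann n = {S \<in> invols n. \<forall>i j. i \<in> {1..int n} \<and> j \<in> {1..int n} \<and> i < j \<and> S i = j \<longrightarrow>
              S ` {i..j} = {i..j} \<and>
              ({i..j} \<inter> fixpts n S = {} \<or> fixpts n S \<subseteq> {i..j})}"

definition Inv :: "nat \<Rightarrow> nat \<Rightarrow> (int \<Rightarrow> int) set" where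
  "Inv n t = {S \<in> invols n. card (fixpts n S) = t}"

text \<open>S_1 (top) and S_2 (bottom): i, j interchanged iff the corresponding nodes (mod n) are joined.\<close>
definition S_side :: "nat \<Rightarrow> bool \<Rightarrow> diagram \<Rightarrow> int \<Rightarrow> int" where
  "S_side n s D i = (if i \<in> {1..int n} \<and> snd (match D (i, s)) = s
                     then (fst (match D (i, s)) - 1) mod int n + 1 else i)"

definition S1 :: "nat \<Rightarrow> diagram \<Rightarrow> int \<Rightarrow> int" where
  "S1 n = S_side n True"

definition S2 :: "nat \<Rightarrow> diagram \<Rightarrow> int \<Rightarrow> int" where
  "S2 n = S_side n False"

definition w1 :: "diagram \<Rightarrow> nat" where
  "w1 D = card {(i, j). i > j \<and> match D (j, False) = (i, True) \<and> j \<le> 0 \<and> 0 < i}"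

definition w2 :: "diagram \<Rightarrow> nat" where
  "w2 D = card {(i, j). i < j \<and> match D (j, False) = (i, True) \<and> i \<le> 0 \<and> 0 < j}"

definition wind :: "diagram \<Rightarrow> int" where
  "wind D = int (w1 D) - int (w2 D)"

definition bracket :: "nat \<Rightarrow> (int \<Rightarrow> int) \<Rightarrow> (int \<Rightarrow> int) \<Rightarrow> int \<Rightarrow> diagram" where
  "bracket n A B w = (THE D. is_affine_diagram n D \<and> has_vertical D \<and>
       S1 n D = A \<and> S2 n D = B \<and> wind D = w)"

definition rmin :: "nat \<Rightarrow> (int \<Rightarrow> int) \<Rightarrow> (int \<Rightarrow> int) \<Rightarrow> int" where
  "rmin n A B = int (LEAST r::nat. in_O (bracket n A B (int r)))"

end

theory Submission
  imports Defs
begin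

definition rr :: "nat \<Rightarrow> int \<Rightarrow> int" where "rr n x = (x - 1) mod int n + 1"
definition qq :: "nat \<Rightarrow> int \<Rightarrow> int" where "qq n x = (x - 1) div int n"

lemma rr_bounds: "n > 0 \<Longrightarrow> 1 \<le> rr n x \<and> rr n x \<le> int n"
  unfolding rr_def by (simp add: int_one_le_iff_zero_less pos_mod_bound add1_zle_eq)

lemma rr_qq: "x = rr n x + qq n x * int n"
  unfolding rr_def qq_def using mod_div_mult_eq[of "x - 1" "int n"] by linarith

lemma rr_shift: "rr n (x + k * int n) = rr n x"
proof -
  have "x + k * int n - 1 = (x - 1) + k * int n" by simp
  then show ?thesis unfolding rr_def by (metis mod_mult_self1)
qed

lemma qq_shift: "n > 0 \<Longrightarrow> qq n (x + k * int n) = qq n x + k"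
  unfolding qq_def by (simp add: diff_add_eq[symmetric])

lemma rr_id: "1 \<le> x \<Longrightarrow> x \<le> int n \<Longrightarrow> rr n x = x"
  unfolding rr_def by simp

lemma qq_id: "1 \<le> x \<Longrightarrow> x \<le> int n \<Longrightarrow> qq n x = 0"
  unfolding qq_def by simp

lemma rr_eq_iff: "n > 0 \<Longrightarrow> rr n x = rr n y \<longleftrightarrow> y = x + (qq n y - qq n x) * int n"
proof
  assume "rr n x = rr n y"
  then show "y = x + (qq n y - qq n x) * int n"
    using rr_qq[of x n] rr_qq[of y n] by (simp add: algebra_simps)
next
  assume "y = x + (qq n y - qq n x) * int n"
  then show "rr n x = rr n y" using rr_shift by metis
qed

lemma divmod_int_triv: "0 \<le> r \<Longrightarrow> r < t \<Longrightarrow> (q * t + r) div t = q \<and> (q * t + r) mod t = (r::int)"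
  by (simp add: add.commute)

definition enum :: "nat \<Rightarrow> int set \<Rightarrow> int \<Rightarrow> int" where
  "enum n E k = sorted_list_of_set E ! nat ((k - 1) mod int (card E)) + ((k - 1) div int (card E)) * int n"

definition einv :: "nat \<Rightarrow> int set \<Rightarrow> int \<Rightarrow> int" where
  "einv n E x = (THE k. enum n E k = x)"

locale enumset =
  fixes n :: nat and E :: "int set"
  assumes E_sub: "E \<subseteq> {1..int n}" and E_ne: "E \<noteq> {}"
begin

lemma fin: "finite E" using E_sub finite_subset by blast
lemma cpos: "card E > 0" using fin E_ne by (simp add: card_gt_0_iff)
lemma npos: "n > 0" using E_sub E_ne by fastforce

abbreviation "e \<equiv> sorted_list_of_set E"

lemma len: "length e = card E" using fin by simp
lemma nth_in: "j < card E \<Longrightarrow> e ! j \<in> E"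
  using fin len by (metis nth_mem set_sorted_list_of_set)
lemma nth_bnd: "j < card E \<Longrightarrow> 1 \<le> e ! j \<and> e ! j \<le> int n"
proof -
  assume "j < card E"
  then have "e ! j \<in> {1..int n}" using nth_in E_sub by blast
  then show ?thesis by simp
qed
lemma nth_less: "j < j' \<Longrightarrow> j' < card E \<Longrightarrow> e ! j < e ! j'"
  using strict_sorted_list_of_set[of E] len by (simp add: sorted_wrt_nth_less)

lemma en_shift: "enum n E (k + int (card E)) = enum n E k + int n"
proof -
  have "k + int (card E) - 1 = (k - 1) + 1 * int (card E)" by simp
  then show ?thesis unfolding enum_def using cpos
    by (simp only: mod_mult_self1 div_mult_self1) (simp add: algebra_simps)
qed

lemma en_shiftk: "enum n E (k + m * int (card E)) = enum n E k + m * int n"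
proof (induction m rule: int_induct[where k=0])
  case base then show ?case by simp
next
  case (step1 i)
  have eq: "k + (i + 1) * int (card E) = (k + i * int (card E)) + int (card E)"
    by (simp add: algebra_simps)
  have "enum n E (k + (i + 1) * int (card E)) = enum n E (k + i * int (card E)) + int n"
    by (simp only: eq en_shift)
  then show ?case using step1 by (simp add: algebra_simps)
next
  case (step2 i)
  have "enum n E (k + i * int (card E)) = enum n E ((k + (i - 1) * int (card E)) + int (card E))"
    by (simp add: algebra_simps)
  also have "\<dots> = enum n E (k + (i - 1) * int (card E)) + int n" using en_shift by simp
  finally show ?case using step2 by (simp add: algebra_simps)
qed

lemma en_step: "enum n E k < enum n E (k + 1)"
proof -
  define t where "t = int (card E)"
  define q where "q = (k - 1) div t"
  define r where "r = (k - 1) mod t"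
  have tp: "t > 0" using cpos t_def by simp
  have r0: "0 \<le> r" "r < t" using tp r_def by auto
  have kk: "k - 1 = q * t + r" using q_def r_def by simp
  have ek: "enum n E k = e ! nat r + q * int n" unfolding enum_def using q_def r_def t_def by simp
  show ?thesis
  proof (cases "r + 1 < t")
    case True
    have kk': "k = q * t + (r + 1)" using kk by simp
    have d: "(q * t + (r + 1)) div t = q \<and> (q * t + (r + 1)) mod t = r + 1"
      using divmod_int_triv[of "r+1" t q] True r0 by linarith
    have e1: "k + 1 - 1 = q * t + (r + 1)" using kk' by simp
    have "(k + 1 - 1) div t = q" "(k + 1 - 1) mod t = r + 1" by (simp only: e1 d)+
    then have "enum n E (k+1) = e ! nat (r+1) + q * int n" unfolding enum_def t_def by simp
    moreover have "e ! nat r < e ! nat (r+1)" using nth_less[of "nat r" "nat (r+1)"] True r0 t_def by simp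
    ultimately show ?thesis using ek by simp
  next
    case False
    then have rt: "r = t - 1" using r0 by simp
    have kk': "k = (q + 1) * t + 0" using kk rt by (simp add: algebra_simps)
    have d: "((q + 1) * t + 0) div t = q + 1 \<and> ((q + 1) * t + 0) mod t = 0"
      using divmod_int_triv[of 0 t "q+1"] tp by linarith
    have e1: "k + 1 - 1 = (q + 1) * t + 0" using kk' by simp
    have "(k + 1 - 1) div t = q + 1" "(k + 1 - 1) mod t = 0" by (simp only: e1 d)+
    then have "enum n E (k+1) = e ! 0 + (q + 1) * int n" unfolding enum_def t_def by simp
    moreover have "1 \<le> e ! 0" using nth_bnd[of 0] cpos by simp
    moreover have "e ! nat r \<le> int n" using nth_bnd[of "nat r"] r0 t_def by simp
    ultimately show ?thesis using ek by (simp add: algebra_simps)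
  qed
qed

lemma en_mono_aux: "enum n E k < enum n E (k + int d + 1)"
proof (induction d)
  case 0 then show ?case using en_step by simp
next
  case (Suc d)
  have "enum n E (k + int d + 1) < enum n E (k + int d + 1 + 1)" using en_step by blast
  then show ?case using Suc by (simp add: algebra_simps)
qed

lemma en_mono: "k < k' \<Longrightarrow> enum n E k < enum n E k'"
  using en_mono_aux[of k "nat (k' - k - 1)"] by simp

lemma en_le_iff: "enum n E k \<le> enum n E k' \<longleftrightarrow> k \<le> k'"
  using en_mono[of k k'] en_mono[of k' k] by (cases k k' rule: linorder_cases) auto

lemma en_less_iff: "enum n E k < enum n E k' \<longleftrightarrow> k < k'"
  using en_mono[of k k'] en_mono[of k' k] by (cases k k' rule: linorder_cases) auto

lemma en_inj: "enum n E k = enum n E k' \<longleftrightarrow> k = k'"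
  using en_mono[of k k'] en_mono[of k' k] by (cases k k' rule: linorder_cases) auto

lemma en_in: "rr n (enum n E k) \<in> E"
proof -
  define t where "t = int (card E)"
  have tp: "t > 0" using cpos t_def by simp
  have m: "0 \<le> (k - 1) mod t" "(k - 1) mod t < t" using tp by simp_all
  have j: "nat ((k - 1) mod t) < card E" using m unfolding t_def by linarith
  have "rr n (enum n E k) = rr n (e ! nat ((k - 1) mod t))"
    unfolding enum_def t_def by (rule rr_shift)
  also have "\<dots> = e ! nat ((k - 1) mod t)" using nth_bnd[OF j] rr_id by simp
  finally show ?thesis using nth_in[OF j] by simp
qed

lemma en_surj: "rr n x \<in> E \<Longrightarrow> \<exists>k. enum n E k = x"
proof -
  assume "rr n x \<in> E"
  then obtain j where j: "j < card E" "e ! j = rr n x"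
    using fin len by (metis in_set_conv_nth set_sorted_list_of_set)
  define t where "t = int (card E)"
  have tp: "t > 0" using cpos t_def by simp
  define k where "k = int j + 1 + qq n x * t"
  have "k - 1 = qq n x * t + int j" using k_def by simp
  then have "(k - 1) div t = qq n x" "(k - 1) mod t = int j"
    using divmod_int_triv[of "int j" t "qq n x"] j t_def by auto
  then have "enum n E k = e ! j + qq n x * int n" unfolding enum_def t_def by simp
  then have "enum n E k = x" using j rr_qq[of x n] by simp
  then show ?thesis by blast
qed

lemma en_range: "(\<exists>k. enum n E k = x) \<longleftrightarrow> rr n x \<in> E"
  using en_surj en_in by blast

lemma en_pos: "1 \<le> enum n E k \<longleftrightarrow> 1 \<le> k"
proof -
  define t where "t = int (card E)"
  have tp: "t > 0" using cpos t_def by simp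
  have "enum n E 1 = e ! 0" unfolding enum_def by simp
  then have e1: "enum n E 1 \<ge> 1" using nth_bnd[of 0] cpos by simp
  have "(0::int) - 1 = (-1) * t + (t - 1)" by simp
  then have "(0 - 1) div t = -1" "(0 - 1) mod t = t - 1"
    using divmod_int_triv[of "t - 1" t "-1"] tp by simp_all
  then have "enum n E 0 = e ! nat (t - 1) - int n" unfolding enum_def t_def by simp
  moreover have "nat (t - 1) < card E" using tp t_def by simp
  ultimately have e0: "enum n E 0 \<le> 0" using nth_bnd by fastforce
  show ?thesis
  proof
    assume "1 \<le> enum n E k" then show "1 \<le> k" using e0 en_le_iff[of k 0] by linarith
  next
    assume "1 \<le> k" then show "1 \<le> enum n E k" using e1 en_le_iff[of 1 k] by linarith
  qed
qed

lemma einv_en: "einv n E (enum n E k) = k"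
  unfolding einv_def by (rule the_equality) (simp_all add: en_inj)

lemma en_einv: "rr n x \<in> E \<Longrightarrow> enum n E (einv n E x) = x"
proof -
  assume "rr n x \<in> E"
  then obtain k where "enum n E k = x" using en_surj by blast
  then show ?thesis using einv_en[of k] by simp
qed

end

definition ncTT :: "(node \<Rightarrow> node) \<Rightarrow> bool" where
  "ncTT M \<longleftrightarrow> (\<forall>a b c d. M (b,True) = (a,True) \<and> a < b \<and> M (d,True) = (c,True) \<and> c < d \<longrightarrow> \<not> (c < a \<and> a < d \<and> d < b))"
definition ncTV :: "(node \<Rightarrow> node) \<Rightarrow> bool" where
  "ncTV M \<longleftrightarrow> (\<forall>c d x y. M (d,True) = (c,True) \<and> c < d \<and> M (y,False) = (x,True) \<longrightarrow> \<not> (c < x \<and> x < d))"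
definition ncVV :: "(node \<Rightarrow> node) \<Rightarrow> bool" where
  "ncVV M \<longleftrightarrow> (\<forall>x y x' y'. M (y,False) = (x,True) \<and> M (y',False) = (x',True) \<and> y < y' \<longrightarrow> \<not> (x' < x))"
definition ncBV :: "(node \<Rightarrow> node) \<Rightarrow> bool" where
  "ncBV M \<longleftrightarrow> (\<forall>a b x y. M (a,False) = (b,False) \<and> a < b \<and> M (y,False) = (x,True) \<longrightarrow> \<not> (a < y \<and> y < b))"
definition ncBB :: "(node \<Rightarrow> node) \<Rightarrow> bool" where
  "ncBB M \<longleftrightarrow> (\<forall>a b c d. M (a,False) = (b,False) \<and> a < b \<and> M (c,False) = (d,False) \<and> c < d \<longrightarrow> \<not> (a < c \<and> c < b \<and> b < d))"

definition nc :: "(node \<Rightarrow> node) \<Rightarrow> bool" where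
  "nc M \<longleftrightarrow> (\<forall>p q. bless p (M p) \<and> bless q (M q) \<longrightarrow>
            \<not> (bless p q \<and> bless q (M p) \<and> bless (M p) (M q)))"

lemma nc_imp: "nc M \<Longrightarrow> ncTT M \<and> ncTV M \<and> ncVV M \<and> ncBV M \<and> ncBB M"
  unfolding nc_def ncTT_def ncTV_def ncVV_def ncBV_def ncBB_def
proof (intro conjI allI impI notI)
  assume h: "\<forall>p q. bless p (M p) \<and> bless q (M q) \<longrightarrow> \<not> (bless p q \<and> bless q (M p) \<and> bless (M p) (M q))"
  {
    fix a b c d assume "M (b, True) = (a, True) \<and> a < b \<and> M (d, True) = (c, True) \<and> c < d" "c < a \<and> a < d \<and> d < b"
    then show False using h[rule_format, of "(b,True)" "(d,True)"] by auto
  }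
  {
    fix c d x y assume "M (d, True) = (c, True) \<and> c < d \<and> M (y, False) = (x, True)" "c < x \<and> x < d"
    then show False using h[rule_format, of "(y,False)" "(d,True)"] by auto
  }
  {
    fix x y x' y' assume "M (y, False) = (x, True) \<and> M (y', False) = (x', True) \<and> y < y'" "x' < x"
    then show False using h[rule_format, of "(y,False)" "(y',False)"] by auto
  }
  {
    fix a b x y assume "M (a, False) = (b, False) \<and> a < b \<and> M (y, False) = (x, True)" "a < y \<and> y < b"
    then show False using h[rule_format, of "(a,False)" "(y,False)"] by auto
  }
  {
    fix a b c d assume "M (a, False) = (b, False) \<and> a < b \<and> M (c, False) = (d, False) \<and> c < d" "a < c \<and> c < b \<and> b < d"
    then show False using h[rule_format, of "(a,False)" "(c,False)"] by auto
  }
qed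

lemma nc_intro:
  assumes TT: "ncTT M" and TV: "ncTV M" and VV: "ncVV M" and BV: "ncBV M" and BB: "ncBB M"
  shows "nc M"
  unfolding nc_def
proof (intro allI impI notI)
  fix p q
  assume h1: "bless p (M p) \<and> bless q (M q)" and h2: "bless p q \<and> bless q (M p) \<and> bless (M p) (M q)"
  obtain x s where p: "p = (x,s)" by (cases p)
  obtain y u where q: "q = (y,u)" by (cases q)
  obtain x' s' where mp: "M p = (x',s')" by (cases "M p")
  obtain y' u' where mq: "M q = (y',u')" by (cases "M q")
  have A: "bless (x,s) (x',s')" "bless (y,u) (y',u')" "bless (x,s) (y,u)" "bless (y,u) (x',s')" "bless (x',s') (y',u')"
    using h1 h2 p q mp mq by auto
  have mp': "M (x,s) = (x',s')" and mq': "M (y,u) = (y',u')" using p q mp mq by auto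
  show False
  proof (cases s)
    case True
    then have s': "s' = True" using A(1) by (cases s') auto
    have u: "u = True" using A(3) True by (cases u) auto
    have u': "u' = True" using A(2) u by (cases u') auto
    have "x' < x" "y' < y" "y < x" "x' < y" "y' < x'" using A True s' u u' by auto
    then show False using TT[unfolded ncTT_def, rule_format, of x x' y y'] mp' mq' True s' u u' by auto
  next
    case False
    show False
    proof (cases s')
      case s': True
      show False
      proof (cases u)
        case True
        have u': "u' = True" using A(2) True by (cases u') auto
        have "y' < y" "x' < y" "y' < x'" using A True s' u' by auto
        then show False using TV[unfolded ncTV_def, rule_format, of y y' x x'] mp' mq' False s' True u' by auto
      next
        case u: False
        show False
        proof (cases u')
          case True
          have "x < y" "y' < x'" using A False s' u True by auto
          then show False using VV[unfolded ncVV_def, rule_format, of x x' y y'] mp' mq' False s' u True by auto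
        next
          case u': False
          then show False using A(5) s' by auto
        qed
      qed
    next
      case s': False
      show False
      proof (cases u)
        case True
        then show False using A(4) s' by auto
      next
        case u: False
        show False
        proof (cases u')
          case True
          have "x < x'" "x < y" "y < x'" using A False s' u True by auto
          then show False using BV[unfolded ncBV_def, rule_format, of x x' y y'] mp' mq' False s' u True by auto
        next
          case u': False
          have "x < x'" "y < y'" "x < y" "y < x'" "x' < y'" using A False s' u u' by auto
          then show False using BB[unfolded ncBB_def, rule_format, of x x' y y'] mp' mq' False s' u u' by auto
        qed
      qed
    qed
  qed
qed

definition pbase :: "nat \<Rightarrow> (int \<Rightarrow> int) \<Rightarrow> int \<Rightarrow> int" where
  "pbase n A i = (if (\<forall>f\<in>{min i (A i)..max i (A i)}. A f \<noteq> f) then A i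
                  else if i < A i then A i - int n else A i + int n)"

definition partner :: "nat \<Rightarrow> (int \<Rightarrow> int) \<Rightarrow> int \<Rightarrow> int" where
  "partner n A x = pbase n A (rr n x) + qq n x * int n"

definition isfix :: "nat \<Rightarrow> (int \<Rightarrow> int) \<Rightarrow> int \<Rightarrow> bool" where
  "isfix n A x \<longleftrightarrow> A (rr n x) = rr n x"

locale annA =
  fixes n :: nat and A :: "int \<Rightarrow> int"
  assumes AAnn: "A \<in> Ann n" and Afx: "fixpts n A \<noteq> {}"
begin

lemma npos: "n > 0" using Afx unfolding fixpts_def by fastforce

lemma inv1: "x \<notin> {1..int n} \<Longrightarrow> A x = x" using AAnn unfolding Ann_def invols_def by auto
lemma inv2: "x \<in> {1..int n} \<Longrightarrow> A x \<in> {1..int n}" using AAnn unfolding Ann_def invols_def by auto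
lemma inv3: "A (A x) = x" using AAnn unfolding Ann_def invols_def by (cases "x \<in> {1..int n}") auto
lemma annular: "i \<in> {1..int n} \<Longrightarrow> j \<in> {1..int n} \<Longrightarrow> i < j \<Longrightarrow> A i = j \<Longrightarrow>
   A ` {i..j} = {i..j} \<and> ({i..j} \<inter> fixpts n A = {} \<or> fixpts n A \<subseteq> {i..j})"
  using AAnn unfolding Ann_def by blast

lemma fix_in: "f \<in> fixpts n A \<longleftrightarrow> f \<in> {1..int n} \<and> A f = f" unfolding fixpts_def by auto

lemma isfix_rr: "isfix n A x \<longleftrightarrow> rr n x \<in> fixpts n A"
  using rr_bounds[OF npos, of x] unfolding isfix_def fixpts_def by auto

lemma isfix_shift: "isfix n A (x + k * int n) \<longleftrightarrow> isfix n A x"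
  unfolding isfix_def by (simp add: rr_shift)

lemma rr_partner_dec: "partner n A x = partner n A (rr n x) + qq n x * int n"
proof -
  have b: "1 \<le> rr n x" "rr n x \<le> int n" using rr_bounds[OF npos] by auto
  show ?thesis unfolding partner_def using rr_id[OF b] qq_id[OF b] by simp
qed

lemma partner_shift: "partner n A (x + k * int n) = partner n A x + k * int n"
  unfolding partner_def using rr_shift qq_shift[OF npos] by (simp add: algebra_simps)

lemma pbase_cases:
  assumes i: "i \<in> {1..int n}" and nf: "A i \<noteq> i"
  shows "((\<forall>f\<in>{min i (A i)..max i (A i)}. A f \<noteq> f) \<and> pbase n A i = A i) \<or>
         (\<not>(\<forall>f\<in>{min i (A i)..max i (A i)}. A f \<noteq> f) \<and> i < A i \<and> pbase n A i = A i - int n) \<or>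
         (\<not>(\<forall>f\<in>{min i (A i)..max i (A i)}. A f \<noteq> f) \<and> A i < i \<and> pbase n A i = A i + int n)"
  using nf unfolding pbase_def by auto

lemma rr_pbase:
  assumes i: "i \<in> {1..int n}" and nf: "A i \<noteq> i"
  shows "rr n (pbase n A i) = A i"
proof -
  have j: "A i \<in> {1..int n}" using inv2 i by blast
  then have r: "rr n (A i) = A i" using rr_id by auto
  have "rr n (A i - int n) = A i" using rr_shift[of n "A i" "-1"] r by simp
  moreover have "rr n (A i + int n) = A i" using rr_shift[of n "A i" "1"] r by simp
  ultimately show ?thesis using pbase_cases[OF i nf] r by auto
qed

lemma rr_partner: "\<not> isfix n A x \<Longrightarrow> rr n (partner n A x) = A (rr n x)"
proof -
  assume nf: "\<not> isfix n A x"
  have b: "rr n x \<in> {1..int n}" using rr_bounds[OF npos] by auto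
  have "rr n (partner n A x) = rr n (pbase n A (rr n x))" unfolding partner_def by (rule rr_shift)
  then show ?thesis using rr_pbase[OF b] nf unfolding isfix_def by simp
qed

lemma isfix_partner: "\<not> isfix n A x \<Longrightarrow> \<not> isfix n A (partner n A x)"
  using rr_partner inv3 unfolding isfix_def by metis

lemma base_inv:
  assumes i: "i \<in> {1..int n}" and nf: "A i \<noteq> i"
  shows "partner n A (partner n A i) = i \<and> partner n A i \<noteq> i \<and> \<bar>partner n A i - i\<bar> < int n"
proof -
  let ?j = "A i"
  have j: "?j \<in> {1..int n}" using inv2 i by blast
  have Aj: "A ?j = i" using inv3 by simp
  have nfj: "A ?j \<noteq> ?j" using Aj nf by simp
  have pi: "partner n A i = pbase n A i" unfolding partner_def using rr_id qq_id i by auto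
  have pj: "partner n A ?j = pbase n A ?j" unfolding partner_def using rr_id qq_id j by auto
  have sym: "{min ?j (A ?j)..max ?j (A ?j)} = {min i ?j..max i ?j}" using Aj by (simp add: min.commute max.commute)
  show ?thesis
  proof (cases "\<forall>f\<in>{min i ?j..max i ?j}. A f \<noteq> f")
    case True
    then have "pbase n A i = ?j" "pbase n A ?j = i" unfolding pbase_def using Aj sym by auto
    then show ?thesis using pi pj i j nf by auto
  next
    case False
    show ?thesis
    proof (cases "i < ?j")
      case True
      then have p1: "pbase n A i = ?j - int n" unfolding pbase_def using False by auto
      have p2: "pbase n A ?j = i + int n" unfolding pbase_def using False sym Aj True by auto
      have "partner n A (?j - int n) = partner n A ?j - int n" using partner_shift[of ?j "-1"] by simp
      then show ?thesis using pi pj p1 p2 i j True by auto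
    next
      case lt: False
      then have lt': "?j < i" using nf by simp
      then have p1: "pbase n A i = ?j + int n" unfolding pbase_def using False by auto
      have p2: "pbase n A ?j = i - int n" unfolding pbase_def using False sym Aj lt' by auto
      have "partner n A (?j + int n) = partner n A ?j + int n" using partner_shift[of ?j "1"] by simp
      then show ?thesis using pi pj p1 p2 i j lt' by auto
    qed
  qed
qed

lemma partner_inv: "\<not> isfix n A x \<Longrightarrow> partner n A (partner n A x) = x"
proof -
  assume nf: "\<not> isfix n A x"
  let ?i = "rr n x" let ?q = "qq n x"
  have b: "?i \<in> {1..int n}" using rr_bounds[OF npos] by auto
  have nfi: "A ?i \<noteq> ?i" using nf unfolding isfix_def .
  have "partner n A (partner n A x) = partner n A (partner n A ?i + ?q * int n)"
    using rr_partner_dec by metis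
  also have "\<dots> = partner n A (partner n A ?i) + ?q * int n" by (rule partner_shift)
  also have "\<dots> = x" using base_inv[OF b nfi] rr_qq[of x n] by simp
  finally show ?thesis .
qed

lemma partner_dist: "\<not> isfix n A x \<Longrightarrow> partner n A x \<noteq> x \<and> \<bar>partner n A x - x\<bar> < int n"
proof -
  assume nf: "\<not> isfix n A x"
  let ?i = "rr n x" let ?q = "qq n x"
  have b: "?i \<in> {1..int n}" using rr_bounds[OF npos] by auto
  have nfi: "A ?i \<noteq> ?i" using nf unfolding isfix_def .
  have "partner n A x = partner n A ?i + ?q * int n" using rr_partner_dec by metis
  then show ?thesis using base_inv[OF b nfi] rr_qq[of x n] by auto
qed

lemma base_closure:
  assumes i: "i \<in> {1..int n}" and nf: "A i \<noteq> i" and lt: "i < partner n A i"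
    and y: "i < y" "y < partner n A i"
  shows "\<not> isfix n A y \<and> i < partner n A y \<and> partner n A y < partner n A i"
proof -
  let ?j = "A i"
  have j: "?j \<in> {1..int n}" using inv2 i by blast
  have Aj: "A ?j = i" using inv3 by simp
  have pi: "partner n A i = pbase n A i" unfolding partner_def using rr_id qq_id i by auto
  show ?thesis
  proof (cases "\<forall>f\<in>{min i ?j..max i ?j}. A f \<noteq> f")
    case True
    then have pb: "pbase n A i = ?j" unfolding pbase_def by auto
    then have ij: "i < ?j" using pi lt by simp
    have ann: "A ` {i..?j} = {i..?j}" using annular[OF i j ij] by simp
    have yin: "y \<in> {1..int n}" using y i j pi pb by auto
    have ry: "rr n y = y" "qq n y = 0" using yin rr_id qq_id by auto
    have nfy: "A y \<noteq> y" using True y pi pb ij by auto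
    have Ay: "A y \<in> {i..?j}" using ann y pi pb by auto
    have "A y \<noteq> i" using Aj y pi pb by (metis inv3 less_irrefl)
    moreover have "A y \<noteq> ?j" using y pi pb by (metis inv3 less_irrefl)
    ultimately have Ay2: "i < A y" "A y < ?j" using Ay by auto
    have "{min y (A y)..max y (A y)} \<subseteq> {min i ?j..max i ?j}" using y Ay2 pi pb ij
      by (auto simp: min_def max_def)
    then have "\<forall>f\<in>{min y (A y)..max y (A y)}. A f \<noteq> f" using True by blast
    then have "pbase n A y = A y" unfolding pbase_def by simp
    then have "partner n A y = A y" unfolding partner_def using ry by simp
    then show ?thesis using Ay2 nfy pi pb ry unfolding isfix_def by auto
  next
    case False
    have ji: "?j < i" using False lt pi i j nf unfolding pbase_def by (auto split: if_splits)
    have pb: "pbase n A i = ?j + int n" using False ji unfolding pbase_def by auto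
    have ann: "A ` {?j..i} = {?j..i}" and fxall: "fixpts n A \<subseteq> {?j..i}"
    proof -
      have a: "A ` {?j..i} = {?j..i} \<and> ({?j..i} \<inter> fixpts n A = {} \<or> fixpts n A \<subseteq> {?j..i})"
        using annular[OF j i ji Aj] by simp
      then show "A ` {?j..i} = {?j..i}" by simp
      have "\<exists>f\<in>{?j..i}. A f = f" using False ji by auto
      then obtain f where "f \<in> {?j..i}" "A f = f" by blast
      moreover have "f \<in> {1..int n}" using \<open>f \<in> {?j..i}\<close> i j by auto
      ultimately have "{?j..i} \<inter> fixpts n A \<noteq> {}" unfolding fixpts_def by auto
      then show "fixpts n A \<subseteq> {?j..i}" using a by blast
    qed
    obtain f0 where f0: "f0 \<in> fixpts n A" using Afx by blast
    have f0b: "?j \<le> f0" "f0 \<le> i" using f0 fxall by auto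
    have Af0: "A f0 = f0" using f0 fix_in by auto
    define z where "z = rr n y"
    have zb: "z \<in> {1..int n}" using rr_bounds[OF npos] z_def by auto
    have ycase: "(y \<le> int n \<and> z = y \<and> qq n y = 0) \<or> (y > int n \<and> z = y - int n \<and> qq n y = 1)"
    proof (cases "y \<le> int n")
      case True
      then have "y \<in> {1..int n}" using y i by auto
      then show ?thesis using rr_id qq_id z_def True by auto
    next
      case False
      then have "y - int n \<in> {1..int n}" using y pi pb j by auto
      then have "rr n (y - int n) = y - int n" "qq n (y - int n) = 0" using rr_id qq_id by auto
      moreover have "rr n (y - int n) = rr n y" using rr_shift[of n y "-1"] by simp
      moreover have "qq n (y - int n) = qq n y - 1" using qq_shift[OF npos, of y "-1"] by simp
      ultimately show ?thesis using False z_def by auto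
    qed
    have zout: "z < ?j \<or> i < z" using ycase y pi pb by auto
    have nfz: "A z \<noteq> z" using fxall zout zb unfolding fixpts_def by auto
    have Azb: "A z \<in> {1..int n}" using inv2 zb by blast
    have Azout: "A z < ?j \<or> i < A z"
    proof (rule ccontr)
      assume "\<not> (A z < ?j \<or> i < A z)"
      then have "A z \<in> {?j..i}" by auto
      then have "A (A z) \<in> {?j..i}" using ann by blast
      then show False using inv3 zout by auto
    qed
    have pz: "pbase n A z = (if (z < ?j \<and> A z < ?j) \<or> (i < z \<and> i < A z) then A z
                             else if z < A z then A z - int n else A z + int n)"
    proof (cases "(z < ?j \<and> A z < ?j) \<or> (i < z \<and> i < A z)")
      case True
      have nofix: "\<forall>f\<in>{min z (A z)..max z (A z)}. A f \<noteq> f"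
      proof
        fix f assume f: "f \<in> {min z (A z)..max z (A z)}"
        then have "f \<in> {1..int n}" "f < ?j \<or> i < f" using True zb Azb by (auto simp: min_def max_def split: if_splits)
        then have "f \<notin> fixpts n A" using fxall by auto
        then show "A f \<noteq> f" using \<open>f \<in> {1..int n}\<close> fix_in by blast
      qed
      then show ?thesis by (simp only: pbase_def if_P[OF True] if_P[OF nofix])
    next
      case c: False
      then have "f0 \<in> {min z (A z)..max z (A z)}" using zout Azout f0b by auto
      then have hf: "\<not> (\<forall>f\<in>{min z (A z)..max z (A z)}. A f \<noteq> f)" using Af0 by blast
      then show ?thesis by (simp only: pbase_def if_not_P[OF c] if_not_P[OF hf] if_False)
    qed
    have py: "partner n A y = pbase n A z + qq n y * int n" unfolding partner_def z_def by simp
    have nfy: "\<not> isfix n A y" using nfz unfolding isfix_def z_def by simp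
    show ?thesis using nfy py pz ycase zout Azout Azb zb pi pb y ji j i by (auto split: if_splits)
  qed
qed

lemma closure:
  assumes nf: "\<not> isfix n A a" and lt: "a < partner n A a" and x: "a < x" "x < partner n A a"
  shows "\<not> isfix n A x \<and> a < partner n A x \<and> partner n A x < partner n A a"
proof -
  let ?i = "rr n a" let ?q = "qq n a"
  have b: "?i \<in> {1..int n}" using rr_bounds[OF npos] by auto
  have nfi: "A ?i \<noteq> ?i" using nf unfolding isfix_def .
  have pa: "partner n A a = partner n A ?i + ?q * int n" using rr_partner_dec by metis
  have a: "a = ?i + ?q * int n" using rr_qq by metis
  define y where "y = x - ?q * int n"
  have xy: "x = y + ?q * int n" using y_def by simp
  have lt': "?i < partner n A ?i" using lt pa a by linarith
  have y1: "?i < y" "y < partner n A ?i" using x pa a y_def by linarith+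
  have c: "\<not> isfix n A y \<and> ?i < partner n A y \<and> partner n A y < partner n A ?i"
    using base_closure[OF b nfi lt' y1] .
  have "partner n A x = partner n A y + ?q * int n" using xy partner_shift by metis
  moreover have "isfix n A x \<longleftrightarrow> isfix n A y" using xy isfix_shift by metis
  ultimately show ?thesis using c pa a by auto
qed

end

definition mkm :: "nat \<Rightarrow> (int \<Rightarrow> int) \<Rightarrow> (int \<Rightarrow> int) \<Rightarrow> int \<Rightarrow> node \<Rightarrow> node" where
  "mkm n A B s p = (if snd p then
      (if isfix n A (fst p) then (enum n (fixpts n B) (einv n (fixpts n A) (fst p) - s), False)
       else (partner n A (fst p), True))
    else (if isfix n B (fst p) then (enum n (fixpts n A) (einv n (fixpts n B) (fst p) + s), True)
       else (partner n B (fst p), False)))"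

definition mk :: "nat \<Rightarrow> (int \<Rightarrow> int) \<Rightarrow> (int \<Rightarrow> int) \<Rightarrow> int \<Rightarrow> diagram" where
  "mk n A B s = (mkm n A B s, 0)"

lemma annA_enumset: "annA n A \<Longrightarrow> enumset n (fixpts n A)"
  unfolding enumset_def annA_def fixpts_def by auto

locale goodAB = A: annA n A + B: annA n B for n A B +
  assumes teq: "card (fixpts n A) = card (fixpts n B)"
begin

sublocale EA: enumset n "fixpts n A" using annA_enumset A.annA_axioms .
sublocale EB: enumset n "fixpts n B" using annA_enumset B.annA_axioms .

abbreviation "a \<equiv> enum n (fixpts n A)"
abbreviation "b \<equiv> enum n (fixpts n B)"
abbreviation "ai \<equiv> einv n (fixpts n A)"
abbreviation "bi \<equiv> einv n (fixpts n B)"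

lemma npos: "n > 0" using A.npos .

lemma M_top: "mkm n A B s (x, True) = (if isfix n A x then (b (ai x - s), False) else (partner n A x, True))"
  unfolding mkm_def by simp
lemma M_bot: "mkm n A B s (y, False) = (if isfix n B y then (a (bi y + s), True) else (partner n B y, False))"
  unfolding mkm_def by simp

lemma fixA_a: "isfix n A (a k)" using A.isfix_rr EA.en_in by blast
lemma fixB_b: "isfix n B (b k)" using B.isfix_rr EB.en_in by blast
lemma a_ai: "isfix n A x \<Longrightarrow> a (ai x) = x" using A.isfix_rr EA.en_einv by blast
lemma b_bi: "isfix n B x \<Longrightarrow> b (bi x) = x" using B.isfix_rr EB.en_einv by blast
lemma ai_a: "ai (a k) = k" using EA.einv_en .
lemma bi_b: "bi (b k) = k" using EB.einv_en .

lemma M_inv: "mkm n A B s (mkm n A B s p) = p \<and> mkm n A B s p \<noteq> p"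
proof -
  obtain x u where p: "p = (x, u)" by (cases p)
  show ?thesis
  proof (cases u)
    case True
    show ?thesis
    proof (cases "isfix n A x")
      case True
      then show ?thesis using p \<open>u\<close> M_top M_bot fixB_b bi_b a_ai by simp
    next
      case False
      then show ?thesis using p \<open>u\<close> M_top A.partner_inv A.isfix_partner A.partner_dist by simp
    qed
  next
    case False
    show ?thesis
    proof (cases "isfix n B x")
      case True
      then show ?thesis using p \<open>\<not>u\<close> M_top M_bot fixA_a ai_a b_bi by simp
    next
      case nf: False
      then show ?thesis using p \<open>\<not>u\<close> M_bot B.partner_inv B.isfix_partner B.partner_dist by simp
    qed
  qed
qed

lemma ai_shift: "isfix n A x \<Longrightarrow> ai (x + int n) = ai x + int (card (fixpts n A))"
proof -
  assume h: "isfix n A x"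
  have "a (ai x + int (card (fixpts n A))) = x + int n" using EA.en_shift a_ai[OF h] by simp
  then show ?thesis using ai_a by metis
qed

lemma bi_shift: "isfix n B x \<Longrightarrow> bi (x + int n) = bi x + int (card (fixpts n B))"
proof -
  assume h: "isfix n B x"
  have "b (bi x + int (card (fixpts n B))) = x + int n" using EB.en_shift b_bi[OF h] by simp
  then show ?thesis using bi_b by metis
qed

lemma M_per: "mkm n A B s (x + int n, u) = (fst (mkm n A B s (x, u)) + int n, snd (mkm n A B s (x, u)))"
proof (cases u)
  case True
  have fA: "isfix n A (x + int n) \<longleftrightarrow> isfix n A x" using A.isfix_shift[of x 1] by simp
  have pA: "partner n A (x + int n) = partner n A x + int n" using A.partner_shift[of x 1] by simp
  show ?thesis
  proof (cases "isfix n A x")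
    case True
    have "b (ai (x + int n) - s) = b ((ai x - s) + int (card (fixpts n B)))"
      using ai_shift[OF True] teq by (simp add: algebra_simps)
    also have "\<dots> = b (ai x - s) + int n" by (rule EB.en_shift)
    finally show ?thesis using \<open>u\<close> True fA M_top by simp
  next
    case False
    then show ?thesis using \<open>u\<close> fA pA M_top by simp
  qed
next
  case False
  have fB: "isfix n B (x + int n) \<longleftrightarrow> isfix n B x" using B.isfix_shift[of x 1] by simp
  have pB: "partner n B (x + int n) = partner n B x + int n" using B.partner_shift[of x 1] by simp
  show ?thesis
  proof (cases "isfix n B x")
    case True
    have "a (bi (x + int n) + s) = a ((bi x + s) + int (card (fixpts n A)))"
      using bi_shift[OF True] teq by (simp add: algebra_simps)
    also have "\<dots> = a (bi x + s) + int n" by (rule EA.en_shift)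
    finally show ?thesis using \<open>\<not>u\<close> True fB M_bot by simp
  next
    case nf: False
    then show ?thesis using \<open>\<not>u\<close> fB pB M_bot by simp
  qed
qed

lemma top_arc: "mkm n A B s (y, True) = (x, True) \<Longrightarrow> \<not> isfix n A y \<and> x = partner n A y \<and> \<not> isfix n A x \<and> partner n A x = y"
  using M_top[of s y] A.partner_inv A.isfix_partner by (auto split: if_splits)
lemma bot_arc: "mkm n A B s (y, False) = (x, False) \<Longrightarrow> \<not> isfix n B y \<and> x = partner n B y \<and> \<not> isfix n B x \<and> partner n B x = y"
  using M_bot[of s y] B.partner_inv B.isfix_partner by (auto split: if_splits)
lemma vert: "mkm n A B s (y, False) = (x, True) \<Longrightarrow> isfix n B y \<and> x = a (bi y + s) \<and> isfix n A x"
  using M_bot[of s y] fixA_a by (auto split: if_splits)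

lemma M_nc: "nc (mkm n A B s)"
proof (rule nc_intro)
  show "ncTT (mkm n A B s)" unfolding ncTT_def
  proof (intro allI impI notI)
    fix x y c d
    assume h: "mkm n A B s (y, True) = (x, True) \<and> x < y \<and> mkm n A B s (d, True) = (c, True) \<and> c < d"
      and h2: "c < x \<and> x < d \<and> d < y"
    have 1: "\<not> isfix n A x" "partner n A x = y" using top_arc h by auto
    have 2: "\<not> isfix n A c" "partner n A c = d" using top_arc h by auto
    show False using A.closure[of c x] 1 2 h h2 by auto
  qed
  show "ncTV (mkm n A B s)" unfolding ncTV_def
  proof (intro allI impI notI)
    fix c d x y
    assume h: "mkm n A B s (d, True) = (c, True) \<and> c < d \<and> mkm n A B s (y, False) = (x, True)"
      and h2: "c < x \<and> x < d"
    have 2: "\<not> isfix n A c" "partner n A c = d" using top_arc h by auto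
    have "isfix n A x" using vert h by auto
    then show False using A.closure[of c x] 2 h h2 by auto
  qed
  show "ncVV (mkm n A B s)" unfolding ncVV_def
  proof (intro allI impI notI)
    fix x y x' y'
    assume h: "mkm n A B s (y, False) = (x, True) \<and> mkm n A B s (y', False) = (x', True) \<and> y < y'"
      and h2: "x' < x"
    have 1: "isfix n B y" "x = a (bi y + s)" using vert h by auto
    have 2: "isfix n B y'" "x' = a (bi y' + s)" using vert h by auto
    have "b (bi y) < b (bi y')" using b_bi 1 2 h by simp
    then have "bi y < bi y'" using EB.en_less_iff by blast
    then have "x < x'" using 1 2 EA.en_less_iff by simp
    then show False using h2 by simp
  qed
  show "ncBV (mkm n A B s)" unfolding ncBV_def
  proof (intro allI impI notI)
    fix c d x y
    assume h: "mkm n A B s (c, False) = (d, False) \<and> c < d \<and> mkm n A B s (y, False) = (x, True)"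
      and h2: "c < y \<and> y < d"
    have 2: "\<not> isfix n B c" "partner n B c = d" using bot_arc h by auto
    have "isfix n B y" using vert h by auto
    then show False using B.closure[of c y] 2 h h2 by auto
  qed
  show "ncBB (mkm n A B s)" unfolding ncBB_def
  proof (intro allI impI notI)
    fix x y c d
    assume h: "mkm n A B s (x, False) = (y, False) \<and> x < y \<and> mkm n A B s (c, False) = (d, False) \<and> c < d"
      and h2: "x < c \<and> c < y \<and> y < d"
    have 1: "\<not> isfix n B x" "partner n B x = y" using bot_arc h by auto
    have 2: "\<not> isfix n B c" "partner n B c = d" using bot_arc h by auto
    show False using B.closure[of x c] 1 2 h h2 by auto
  qed
qed

lemma mk_affine: "is_affine_diagram n (mk n A B s)"
  unfolding is_affine_diagram_def match_def nlines_def mk_def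
  using M_inv M_per M_nc[unfolded nc_def] by auto

lemma mk_vert: "has_vertical (mk n A B s)"
  unfolding has_vertical_def match_def mk_def using M_bot fixB_b by auto

lemma mk_S1: "S1 n (mk n A B s) = A"
proof
  fix i
  show "S1 n (mk n A B s) i = A i"
  proof (cases "i \<in> {1..int n}")
    case True
    have r: "rr n i = i" using True rr_id by auto
    show ?thesis
    proof (cases "A i = i")
      case True
      then have "isfix n A i" unfolding isfix_def using r by simp
      then show ?thesis unfolding S1_def S_side_def match_def mk_def using M_top True by simp
    next
      case False
      then have nf: "\<not> isfix n A i" unfolding isfix_def using r by simp
      have "(partner n A i - 1) mod int n + 1 = A i" using A.rr_partner[OF nf] r unfolding rr_def by simp
      then show ?thesis unfolding S1_def S_side_def match_def mk_def using M_top nf True by simp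
    qed
  next
    case False
    then show ?thesis unfolding S1_def S_side_def using A.inv1[OF False] by auto
  qed
qed

lemma mk_S2: "S2 n (mk n A B s) = B"
proof
  fix i
  show "S2 n (mk n A B s) i = B i"
  proof (cases "i \<in> {1..int n}")
    case True
    have r: "rr n i = i" using True rr_id by auto
    show ?thesis
    proof (cases "B i = i")
      case True
      then have "isfix n B i" unfolding isfix_def using r by simp
      then show ?thesis unfolding S2_def S_side_def match_def mk_def using M_bot True by simp
    next
      case False
      then have nf: "\<not> isfix n B i" unfolding isfix_def using r by simp
      have "(partner n B i - 1) mod int n + 1 = B i" using B.rr_partner[OF nf] r unfolding rr_def by simp
      then show ?thesis unfolding S2_def S_side_def match_def mk_def using M_bot nf True by simp
    qed
  next
    case False
    then show ?thesis unfolding S2_def S_side_def using B.inv1[OF False] by auto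
  qed
qed

lemma w1_set: "{(i, j). i > j \<and> mkm n A B s (j, False) = (i, True) \<and> j \<le> 0 \<and> 0 < i}
    = (\<lambda>m. (a (m + s), b m)) ` {1 - s..0}"
proof (intro equalityI subsetI)
  fix p assume "p \<in> {(i, j). i > j \<and> mkm n A B s (j, False) = (i, True) \<and> j \<le> 0 \<and> 0 < i}"
  then obtain i j where p: "p = (i,j)" and h: "mkm n A B s (j, False) = (i, True)" "j \<le> 0" "0 < i" by blast
  have v: "isfix n B j" "i = a (bi j + s)" using vert[OF h(1)] by auto
  have "b (bi j) \<le> 0" using b_bi v h by simp
  then have "bi j \<le> 0" using EB.en_pos[of "bi j"] by simp
  moreover have "1 \<le> bi j + s" using EA.en_pos[of "bi j + s"] v h by simp
  ultimately show "p \<in> (\<lambda>m. (a (m + s), b m)) ` {1 - s..0}" using p v b_bi by force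
next
  fix p assume "p \<in> (\<lambda>m. (a (m + s), b m)) ` {1 - s..0}"
  then obtain m where p: "p = (a (m + s), b m)" and m: "1 - s \<le> m" "m \<le> 0" by auto
  have "b m \<le> 0" using EB.en_pos[of m] m by simp
  moreover have "a (m + s) \<ge> 1" using EA.en_pos[of "m+s"] m by simp
  moreover have "mkm n A B s (b m, False) = (a (m + s), True)" using M_bot fixB_b bi_b by simp
  ultimately show "p \<in> {(i, j). i > j \<and> mkm n A B s (j, False) = (i, True) \<and> j \<le> 0 \<and> 0 < i}"
    using p by auto
qed

lemma w2_set: "{(i, j). i < j \<and> mkm n A B s (j, False) = (i, True) \<and> i \<le> 0 \<and> 0 < j}
    = (\<lambda>m. (a (m + s), b m)) ` {1..-s}"
proof (intro equalityI subsetI)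
  fix p assume "p \<in> {(i, j). i < j \<and> mkm n A B s (j, False) = (i, True) \<and> i \<le> 0 \<and> 0 < j}"
  then obtain i j where p: "p = (i,j)" and h: "mkm n A B s (j, False) = (i, True)" "i \<le> 0" "0 < j" by blast
  have v: "isfix n B j" "i = a (bi j + s)" using vert[OF h(1)] by auto
  have "b (bi j) \<ge> 1" using b_bi v h by simp
  then have "bi j \<ge> 1" using EB.en_pos[of "bi j"] by simp
  moreover have "\<not> 1 \<le> bi j + s" using EA.en_pos[of "bi j + s"] v h by simp
  ultimately show "p \<in> (\<lambda>m. (a (m + s), b m)) ` {1..-s}" using p v b_bi by force
next
  fix p assume "p \<in> (\<lambda>m. (a (m + s), b m)) ` {1..-s}"
  then obtain m where p: "p = (a (m + s), b m)" and m: "1 \<le> m" "m \<le> -s" by auto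
  have "b m \<ge> 1" using EB.en_pos[of m] m by simp
  moreover have "\<not> a (m + s) \<ge> 1" using EA.en_pos[of "m+s"] m by simp
  moreover have "mkm n A B s (b m, False) = (a (m + s), True)" using M_bot fixB_b bi_b by simp
  ultimately show "p \<in> {(i, j). i < j \<and> mkm n A B s (j, False) = (i, True) \<and> i \<le> 0 \<and> 0 < j}"
    using p by auto
qed

lemma inj_ab: "inj (\<lambda>m. (a (m + s), b m))"
  by (rule injI) (simp add: EB.en_inj)

lemma mk_wind: "wind (mk n A B s) = s"
proof -
  have "w1 (mk n A B s) = nat s"
    unfolding w1_def match_def mk_def using w1_set card_image[OF inj_on_subset[OF inj_ab]] by simp
  moreover have "w2 (mk n A B s) = nat (-s)"
    unfolding w2_def match_def mk_def using w2_set card_image[OF inj_on_subset[OF inj_ab]] by simp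
  ultimately show ?thesis unfolding wind_def by simp
qed

end

definition cset :: "(node \<Rightarrow> node) \<Rightarrow> int \<Rightarrow> node set" where
  "cset M i = {p. fst p \<le> i \<and> i < fst (M p)}"

lemma cross_cset: "cross_count D i = card (cset (match D) i) + nlines D"
  unfolding cross_count_def cset_def by simp

lemma par_aux: "(X::nat) + L = Y + R \<Longrightarrow> even (L + R) \<Longrightarrow> even X \<longleftrightarrow> even Y"
  by presburger

lemma cset_step:
  assumes inv: "\<And>p. M (M p) = p" "\<And>p. M p \<noteq> p"
    and fin: "finite (cset M i)"
  shows "even (card (cset M (i+1))) \<longleftrightarrow> even (card (cset M i))"
proof -
  define L where "L = {p. fst p \<le> i \<and> fst (M p) = i+1}"
  define R where "R = {p. fst p = i+1 \<and> i+1 < fst (M p)}"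
  define L' where "L' = {q. fst q = i+1 \<and> fst (M q) \<le> i}"
  have LC: "L \<subseteq> cset M i" unfolding L_def cset_def by auto
  have RC: "R \<inter> cset M i = {}" unfolding R_def cset_def by auto
  have eq: "cset M (i+1) = (cset M i - L) \<union> R" unfolding cset_def L_def R_def by auto
  have Rs: "R \<subseteq> {(i+1, True), (i+1, False)}" unfolding R_def by (auto intro: prod_eqI)
  have finR: "finite R" using Rs finite_subset by blast
  have finL: "finite L" using LC fin finite_subset by blast
  have "card ((cset M i - L) \<union> R) = card (cset M i - L) + card R"
    by (rule card_Un_disjoint) (use fin finR RC in auto)
  then have c1: "card (cset M (i+1)) = card (cset M i - L) + card R" using eq by simp
  have c2: "card (cset M i - L) + card L = card (cset M i)"
    using LC fin by (metis card_Diff_subset finL le_add_diff_inverse2 card_mono)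
  have imL: "M ` L' = L"
  proof (intro equalityI subsetI)
    fix p assume "p \<in> M ` L'" then show "p \<in> L" unfolding L'_def L_def using inv by auto
  next
    fix p assume p: "p \<in> L" then have "M p \<in> L'" unfolding L'_def L_def using inv by auto
    then show "p \<in> M ` L'" using inv(1)[of p] by (metis image_eqI)
  qed
  have injM: "inj M" by (metis inv(1) injI)
  have cL: "card L = card L'" using imL card_image[OF inj_on_subset[OF injM]] by blast
  define N where "N = {q. fst q = i+1 \<and> fst (M q) \<noteq> i+1}"
  have N: "N = L' \<union> R" "L' \<inter> R = {}" unfolding N_def L'_def R_def by auto
  have Ns: "N \<subseteq> {(i+1, True), (i+1, False)}" unfolding N_def by (auto intro: prod_eqI)
  have finN: "finite N" using Ns finite_subset by blast
  have cN: "card N = card L' + card R"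
    using N finN by (metis card_Un_disjoint finite_Un)
  have two: "\<And>q. fst q = i+1 \<Longrightarrow> q = (i+1, True) \<or> q = (i+1, False)"
  proof -
    fix q :: node assume "fst q = i+1"
    then show "q = (i+1, True) \<or> q = (i+1, False)" by (cases q, cases "snd q") auto
  qed
  have sw: "M (i+1, u) = (i+1, \<not> u)" if h: "fst (M (i+1, u)) = i+1" for u
  proof -
    have "M (i+1, u) = (i+1, True) \<or> M (i+1, u) = (i+1, False)" using two h by blast
    moreover have "M (i+1, u) \<noteq> (i+1, u)" using inv(2) by blast
    ultimately show ?thesis by (cases u) auto
  qed
  have evN: "even (card N)"
  proof (cases "fst (M (i+1, True)) = i+1")
    case True
    have 1: "M (i+1, True) = (i+1, False)" using sw[OF True] by simp
    then have 2: "M (i+1, False) = (i+1, True)" using inv(1)[of "(i+1, True)"] by simp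
    have "N = {}"
    proof (rule ccontr)
      assume "N \<noteq> {}"
      then obtain q where q: "q \<in> N" by blast
      then have "q = (i+1, True) \<or> q = (i+1, False)" using two unfolding N_def by blast
      then show False using q 1 2 unfolding N_def by auto
    qed
    then show ?thesis by simp
  next
    case False
    have F2: "fst (M (i+1, False)) \<noteq> i+1"
    proof
      assume h: "fst (M (i+1, False)) = i+1"
      have "M (i+1, False) = (i+1, True)" using sw[OF h] by simp
      then have "M (i+1, True) = (i+1, False)" using inv(1)[of "(i+1, False)"] by simp
      then show False using False by simp
    qed
    have "(i+1, True) \<in> N" "(i+1, False) \<in> N" using False F2 unfolding N_def by auto
    then have "N = {(i+1, True), (i+1, False)}" using Ns by blast
    then show ?thesis by simp
  qed
  have "card (cset M (i+1)) + card L = card (cset M i) + card R" using c1 c2 by simp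
  moreover have "even (card L + card R)" using evN cN cL by simp
  ultimately show ?thesis using par_aux by blast
qed

lemma cset_all:
  assumes inv: "\<And>p. M (M p) = p" "\<And>p. M p \<noteq> p"
    and fin: "\<And>i. finite (cset M i)"
  shows "even (card (cset M i)) \<longleftrightarrow> even (card (cset M 0))"
proof (induction i rule: int_induct[where k=0])
  case base then show ?case by simp
next
  case (step1 i) then show ?case using cset_step[OF inv fin, of i] by simp
next
  case (step2 i) then show ?case using cset_step[OF inv fin, of "i - 1"] by simp
qed

lemma cset_fin:
  assumes "\<And>p. \<bar>fst (M p) - fst p\<bar> \<le> C"
  shows "finite (cset M i)"
proof -
  have "cset M i \<subseteq> {i - C..i} \<times> UNIV"
  proof
    fix p assume "p \<in> cset M i"
    then have "fst p \<le> i" "i < fst (M p)" unfolding cset_def by auto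
    moreover have "\<bar>fst (M p) - fst p\<bar> \<le> C" using assms by blast
    ultimately show "p \<in> {i - C..i} \<times> UNIV" by (cases p) auto
  qed
  moreover have "finite ({i - C..i} \<times> (UNIV :: bool set))" by simp
  ultimately show ?thesis using finite_subset by blast
qed

definition cAB :: "nat \<Rightarrow> (int \<Rightarrow> int) \<Rightarrow> (int \<Rightarrow> int) \<Rightarrow> nat" where
  "cAB n A B = card {x. \<not> isfix n A x \<and> x \<le> 0 \<and> 0 < partner n A x}
             + card {x. \<not> isfix n B x \<and> x \<le> 0 \<and> 0 < partner n B x}"

context goodAB
begin

lemma hbound: "\<exists>C. \<forall>k. \<bar>b (k - s) - a k\<bar> \<le> C"
proof -
  define t where "t = int (card (fixpts n A))"
  have tp: "t > 0" using EA.cpos t_def by simp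
  define h where "h k = \<bar>b (k - s) - a k\<bar>" for k
  define C where "C = Max (h ` {0..<t})"
  have "\<forall>k. h k \<le> C"
  proof
    fix k
    define j where "j = k mod t"
    define m where "m = k div t"
    have k: "k = j + m * t" using j_def m_def by simp
    have "b (k - s) = b ((j - s) + m * int (card (fixpts n B))) " using k teq t_def by (simp add: algebra_simps)
    also have "\<dots> = b (j - s) + m * int n" by (rule EB.en_shiftk)
    finally have 1: "b (k - s) = b (j - s) + m * int n" .
    have 2: "a k = a j + m * int n" using k EA.en_shiftk t_def by simp
    have "h k = h j" unfolding h_def using 1 2 by simp
    moreover have "j \<in> {0..<t}" using j_def tp by simp
    ultimately show "h k \<le> C" unfolding C_def by simp
  qed
  then show ?thesis unfolding h_def by blast
qed

lemma M_bound: "\<exists>C. \<forall>p. \<bar>fst (mkm n A B s p) - fst p\<bar> \<le> C"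
proof -
  obtain C where C: "\<forall>k. \<bar>b (k - s) - a k\<bar> \<le> C" using hbound by blast
  have C0: "0 \<le> C" using C[rule_format, of 0] by linarith
  have "\<forall>p. \<bar>fst (mkm n A B s p) - fst p\<bar> \<le> C + int n"
  proof
    fix p :: node
    obtain x u where p: "p = (x,u)" by (cases p)
    show "\<bar>fst (mkm n A B s p) - fst p\<bar> \<le> C + int n"
    proof (cases u)
      case True
      show ?thesis
      proof (cases "isfix n A x")
        case True
        have "\<bar>b (ai x - s) - a (ai x)\<bar> \<le> C" using C by blast
        then show ?thesis using p \<open>u\<close> True M_top a_ai by simp
      next
        case False
        have "fst (mkm n A B s p) = partner n A x" using p \<open>u\<close> False M_top by simp
        then show ?thesis using p A.partner_dist[OF False] C0 by simp
      qed
    next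
      case False
      show ?thesis
      proof (cases "isfix n B x")
        case True
        have "\<bar>b ((bi x + s) - s) - a (bi x + s)\<bar> \<le> C" using C by blast
        then show ?thesis using p \<open>\<not>u\<close> True M_bot b_bi by simp
      next
        case nf: False
        have "fst (mkm n A B s p) = partner n B x" using p \<open>\<not>u\<close> nf M_bot by simp
        then show ?thesis using p B.partner_dist[OF nf] C0 by simp
      qed
    qed
  qed
  then show ?thesis by blast
qed

lemma cset0: "cset (mkm n A B s) 0 =
   ((\<lambda>x. (x, True)) ` {x. \<not> isfix n A x \<and> x \<le> 0 \<and> 0 < partner n A x}
   \<union> (\<lambda>x. (x, False)) ` {x. \<not> isfix n B x \<and> x \<le> 0 \<and> 0 < partner n B x})
   \<union> ((\<lambda>k. (a k, True)) ` {s+1..0} \<union> (\<lambda>m. (b m, False)) ` {1-s..0})"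
proof (intro equalityI subsetI)
  fix p assume p: "p \<in> cset (mkm n A B s) 0"
  obtain x u where pe: "p = (x,u)" by (cases p)
  have h: "x \<le> 0" "0 < fst (mkm n A B s (x,u))" using p pe unfolding cset_def by auto
  show "p \<in> ((\<lambda>x. (x, True)) ` {x. \<not> isfix n A x \<and> x \<le> 0 \<and> 0 < partner n A x}
   \<union> (\<lambda>x. (x, False)) ` {x. \<not> isfix n B x \<and> x \<le> 0 \<and> 0 < partner n B x})
   \<union> ((\<lambda>k. (a k, True)) ` {s+1..0} \<union> (\<lambda>m. (b m, False)) ` {1-s..0})"
  proof (cases u)
    case True
    show ?thesis
    proof (cases "isfix n A x")
      case fx: True
      have 1: "a (ai x) = x" using a_ai[OF fx] .
      have "ai x \<le> 0" using EA.en_pos[of "ai x"] 1 h by simp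
      moreover have "1 \<le> ai x - s" using EB.en_pos[of "ai x - s"] h M_top fx True by simp
      moreover have "p = (a (ai x), True)" using pe True 1 by simp
      ultimately have "p \<in> (\<lambda>k. (a k, True)) ` {s+1..0}" by (intro rev_image_eqI[of "ai x"]) auto
      then show ?thesis by blast
    next
      case False
      then show ?thesis using pe True h M_top by auto
    qed
  next
    case False
    show ?thesis
    proof (cases "isfix n B x")
      case fx: True
      have 1: "b (bi x) = x" using b_bi[OF fx] .
      have "bi x \<le> 0" using EB.en_pos[of "bi x"] 1 h by simp
      moreover have "1 \<le> bi x + s" using EA.en_pos[of "bi x + s"] h M_bot fx False by simp
      moreover have "p = (b (bi x), False)" using pe False 1 by simp
      ultimately have "p \<in> (\<lambda>m. (b m, False)) ` {1-s..0}" by (intro rev_image_eqI[of "bi x"]) auto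
      then show ?thesis by blast
    next
      case nf: False
      then show ?thesis using pe False h M_bot by auto
    qed
  qed
next
  fix p assume p: "p \<in> ((\<lambda>x. (x, True)) ` {x. \<not> isfix n A x \<and> x \<le> 0 \<and> 0 < partner n A x}
   \<union> (\<lambda>x. (x, False)) ` {x. \<not> isfix n B x \<and> x \<le> 0 \<and> 0 < partner n B x})
   \<union> ((\<lambda>k. (a k, True)) ` {s+1..0} \<union> (\<lambda>m. (b m, False)) ` {1-s..0})"
  show "p \<in> cset (mkm n A B s) 0"
  proof -
    { assume "p \<in> (\<lambda>k. (a k, True)) ` {s+1..0}"
      then obtain k where k: "p = (a k, True)" "s + 1 \<le> k" "k \<le> 0" by auto
      have "a k \<le> 0" using EA.en_pos[of k] k by simp
      moreover have "b (k - s) \<ge> 1" using EB.en_pos[of "k - s"] k by simp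
      ultimately have ?thesis using k M_top fixA_a ai_a unfolding cset_def by simp }
    moreover
    { assume "p \<in> (\<lambda>m. (b m, False)) ` {1-s..0}"
      then obtain m where k: "p = (b m, False)" "1 - s \<le> m" "m \<le> 0" by auto
      have "b m \<le> 0" using EB.en_pos[of m] k by simp
      moreover have "a (m + s) \<ge> 1" using EA.en_pos[of "m + s"] k by simp
      ultimately have ?thesis using k M_bot fixB_b bi_b unfolding cset_def by simp }
    moreover
    { assume "p \<in> (\<lambda>x. (x, True)) ` {x. \<not> isfix n A x \<and> x \<le> 0 \<and> 0 < partner n A x}"
      then have ?thesis using M_top unfolding cset_def by auto }
    moreover
    { assume "p \<in> (\<lambda>x. (x, False)) ` {x. \<not> isfix n B x \<and> x \<le> 0 \<and> 0 < partner n B x}"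
      then have ?thesis using M_bot unfolding cset_def by auto }
    ultimately show ?thesis using p by blast
  qed
qed

lemma finTT: "finite {x. \<not> isfix n A x \<and> x \<le> 0 \<and> 0 < partner n A x}"
proof -
  have "{x. \<not> isfix n A x \<and> x \<le> 0 \<and> 0 < partner n A x} \<subseteq> {- int n..0}"
    using A.partner_dist by fastforce
  then show ?thesis using finite_subset by blast
qed

lemma finBB: "finite {x. \<not> isfix n B x \<and> x \<le> 0 \<and> 0 < partner n B x}"
proof -
  have "{x. \<not> isfix n B x \<and> x \<le> 0 \<and> 0 < partner n B x} \<subseteq> {- int n..0}"
    using B.partner_dist by fastforce
  then show ?thesis using finite_subset by blast
qed

lemma card_cset0: "card (cset (mkm n A B s) 0) = cAB n A B + nat (-s) + nat s"
proof -
  let ?T = "(\<lambda>x. (x, True)) ` {x. \<not> isfix n A x \<and> x \<le> 0 \<and> 0 < partner n A x}"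
  let ?B = "(\<lambda>x. (x, False)) ` {x. \<not> isfix n B x \<and> x \<le> 0 \<and> 0 < partner n B x}"
  let ?VT = "(\<lambda>k. (a k, True)) ` {s+1..0}"
  let ?VB = "(\<lambda>m. (b m, False)) ` {1-s..0}"
  have injT: "inj (\<lambda>x::int. (x, True))" by (rule injI) simp
  have injB: "inj (\<lambda>x::int. (x, False))" by (rule injI) simp
  have injVT: "inj (\<lambda>k. (a k, True))" by (rule injI) (simp add: EA.en_inj)
  have injVB: "inj (\<lambda>m. (b m, False))" by (rule injI) (simp add: EB.en_inj)
  have cT: "card ?T = card {x. \<not> isfix n A x \<and> x \<le> 0 \<and> 0 < partner n A x}"
    using card_image[OF inj_on_subset[OF injT]] by blast
  have cB: "card ?B = card {x. \<not> isfix n B x \<and> x \<le> 0 \<and> 0 < partner n B x}"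
    using card_image[OF inj_on_subset[OF injB]] by blast
  have cVT: "card ?VT = nat (-s)" using card_image[OF inj_on_subset[OF injVT]] by simp
  have cVB: "card ?VB = nat s" using card_image[OF inj_on_subset[OF injVB]] by simp
  have d1: "?T \<inter> ?B = {}" by auto
  have d2: "?VT \<inter> ?VB = {}" by auto
  have d3: "(?T \<union> ?B) \<inter> (?VT \<union> ?VB) = {}"
  proof -
    have "?T \<inter> ?VT = {}" using fixA_a by auto
    moreover have "?B \<inter> ?VB = {}" using fixB_b by auto
    ultimately show ?thesis by auto
  qed
  have f: "finite ?T" "finite ?B" "finite ?VT" "finite ?VB" using finTT finBB by auto
  have "card ((?T \<union> ?B) \<union> (?VT \<union> ?VB)) = card (?T \<union> ?B) + card (?VT \<union> ?VB)"
    using d3 f by (simp add: card_Un_disjoint)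
  also have "\<dots> = card ?T + card ?B + (card ?VT + card ?VB)"
    using d1 d2 f by (simp add: card_Un_disjoint)
  finally show ?thesis using cset0 cT cB cVT cVB unfolding cAB_def by simp
qed

lemma mk_inO: "in_O (mk n A B s) \<longleftrightarrow> even (int (cAB n A B) + s)"
proof -
  let ?M = "mkm n A B s"
  obtain C where C: "\<forall>p. \<bar>fst (?M p) - fst p\<bar> \<le> C" using M_bound by blast
  have fin: "\<And>i. finite (cset ?M i)" using cset_fin C by blast
  have inv: "\<And>p. ?M (?M p) = p" "\<And>p. ?M p \<noteq> p" using M_inv by auto
  have "in_O (mk n A B s) \<longleftrightarrow> (\<forall>i. even (card (cset ?M i)))"
    unfolding in_O_def cross_cset match_def nlines_def mk_def by simp
  also have "\<dots> \<longleftrightarrow> even (card (cset ?M 0))" using cset_all[OF inv fin] by blast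
  also have "\<dots> \<longleftrightarrow> even (int (cAB n A B) + s)"
  proof -
    have "int (card (cset ?M 0)) = int (cAB n A B) + \<bar>s\<bar>" using card_cset0 by simp
    moreover have "even (int (card (cset ?M 0))) \<longleftrightarrow> even (card (cset ?M 0))" by simp
    moreover have "even (int (cAB n A B) + \<bar>s\<bar>) \<longleftrightarrow> even (int (cAB n A B) + s)"
      by (cases "s \<ge> 0") (auto simp: even_add)
    ultimately show ?thesis by metis
  qed
  finally show ?thesis .
qed

end

definition flipm :: "(node \<Rightarrow> node) \<Rightarrow> node \<Rightarrow> node" where
  "flipm M p = (fst (M (fst p, \<not> snd p)), \<not> snd (M (fst p, \<not> snd p)))"

definition flip :: "diagram \<Rightarrow> diagram" where
  "flip D = (flipm (match D), nlines D)"

lemma flipm_simp: "flipm M (x, u) = (fst (M (x, \<not> u)), \<not> snd (M (x, \<not> u)))"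
  unfolding flipm_def by simp

lemma flipm_eq: "flipm M (x, u) = (y, v) \<longleftrightarrow> M (x, \<not> u) = (y, \<not> v)"
  unfolding flipm_def by (cases "M (x, \<not> u)") auto

lemma match_flip: "match (flip D) = flipm (match D)" unfolding flip_def match_def by simp
lemma nlines_flip: "nlines (flip D) = nlines D" unfolding flip_def nlines_def by simp

lemma hv_flip:
  assumes inv: "\<And>p. match D (match D p) = p"
  shows "has_vertical (flip D) \<longleftrightarrow> has_vertical D"
proof
  assume "has_vertical (flip D)"
  then obtain x where "snd (flipm (match D) (x, False)) = True" unfolding has_vertical_def match_flip by blast
  then have "snd (match D (x, True)) = False" unfolding flipm_def by simp
  then obtain y where y: "match D (x, True) = (y, False)" by (metis prod.collapse)
  then have "match D (y, False) = (x, True)" using inv by metis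
  then show "has_vertical D" unfolding has_vertical_def by (metis snd_conv)
next
  assume "has_vertical D"
  then obtain x where "snd (match D (x, False)) = True" unfolding has_vertical_def by blast
  then obtain y where y: "match D (x, False) = (y, True)" by (metis prod.collapse)
  then have "match D (y, True) = (x, False)" using inv by metis
  then have "snd (flipm (match D) (y, False)) = True" unfolding flipm_def by simp
  then show "has_vertical (flip D)" unfolding has_vertical_def match_flip by blast
qed

lemma nc_flip:
  assumes inv: "\<And>p. M (M p) = p" and nc: "nc M"
  shows "nc (flipm M)"
proof -
  have c: "ncTT M" "ncTV M" "ncVV M" "ncBV M" "ncBB M" using nc_imp[OF nc] by auto
  have e: "\<And>x u y v. flipm M (x, u) = (y, v) \<longleftrightarrow> M (x, \<not> u) = (y, \<not> v)" using flipm_eq by blast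
  have sw: "\<And>p q. M p = q \<Longrightarrow> M q = p" using inv by metis
  show ?thesis
  proof (rule nc_intro)
    show "ncTT (flipm M)" unfolding ncTT_def e
    proof (intro allI impI notI)
      fix a b c d assume h: "M (b, \<not> True) = (a, \<not> True) \<and> a < b \<and> M (d, \<not> True) = (c, \<not> True) \<and> c < d"
        and h2: "c < a \<and> a < d \<and> d < b"
      have "M (c, False) = (d, False)" "M (a, False) = (b, False)"
        using h sw[of "(d,False)" "(c,False)"] sw[of "(b,False)" "(a,False)"] by auto
      then show False using c(5)[unfolded ncBB_def, rule_format, of c d a b] h h2 by auto
    qed
    show "ncBB (flipm M)" unfolding ncBB_def e
    proof (intro allI impI notI)
      fix a b c d assume h: "M (a, \<not> False) = (b, \<not> False) \<and> a < b \<and> M (c, \<not> False) = (d, \<not> False) \<and> c < d"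
        and h2: "a < c \<and> c < b \<and> b < d"
      have "M (b, True) = (a, True)" "M (d, True) = (c, True)"
        using h sw[of "(a,True)" "(b,True)"] sw[of "(c,True)" "(d,True)"] by auto
      then show False using c(1)[unfolded ncTT_def, rule_format, where a=c and b=d and c=a and d=b] h h2 by auto
    qed
    show "ncTV (flipm M)" unfolding ncTV_def e
    proof (intro allI impI notI)
      fix c d x y assume h: "M (d, \<not> True) = (c, \<not> True) \<and> c < d \<and> M (y, \<not> False) = (x, \<not> True)"
        and h2: "c < x \<and> x < d"
      have "M (c, False) = (d, False)" "M (x, False) = (y, True)"
        using h sw[of "(d,False)" "(c,False)"] sw[of "(y,True)" "(x,False)"] by auto
      then show False using c(4)[unfolded ncBV_def, rule_format, where a=c and b=d and y=x and x=y] h h2 by auto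
    qed
    show "ncBV (flipm M)" unfolding ncBV_def e
    proof (intro allI impI notI)
      fix a b x y assume h: "M (a, \<not> False) = (b, \<not> False) \<and> a < b \<and> M (y, \<not> False) = (x, \<not> True)"
        and h2: "a < y \<and> y < b"
      have "M (b, True) = (a, True)" "M (x, False) = (y, True)"
        using h sw[of "(a,True)" "(b,True)"] sw[of "(y,True)" "(x,False)"] by auto
      then show False using c(2)[unfolded ncTV_def, rule_format, where c=a and d=b and y=x and x=y] h h2 by auto
    qed
    show "ncVV (flipm M)" unfolding ncVV_def e
    proof (intro allI impI notI)
      fix x y x' y' assume h: "M (y, \<not> False) = (x, \<not> True) \<and> M (y', \<not> False) = (x', \<not> True) \<and> y < y'"
        and h2: "x' < x"
      have "M (x, False) = (y, True)" "M (x', False) = (y', True)"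
        using h sw[of "(y,True)" "(x,False)"] sw[of "(y',True)" "(x',False)"] by auto
      then show False using c(3)[unfolded ncVV_def, rule_format, where y=x' and x=y' and y'=x and x'=y] h h2 by auto
    qed
  qed
qed

lemma affine_flip:
  assumes "is_affine_diagram n D"
  shows "is_affine_diagram n (flip D)"
proof -
  let ?M = "match D"
  have inv: "\<And>p. ?M (?M p) = p" "\<And>p. ?M p \<noteq> p" using assms unfolding is_affine_diagram_def by auto
  have per: "\<And>x s. ?M (x + int n, s) = (fst (?M (x, s)) + int n, snd (?M (x, s)))"
    using assms unfolding is_affine_diagram_def by auto
  have nc: "nc ?M" using assms unfolding is_affine_diagram_def nc_def by auto
  have nl: "nlines D > 0 \<Longrightarrow> \<not> has_vertical D" using assms unfolding is_affine_diagram_def by auto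
  have i1: "\<And>p. flipm ?M p \<noteq> p"
  proof -
    fix p :: node obtain x u where p: "p = (x,u)" by (cases p)
    show "flipm ?M p \<noteq> p" using inv(2)[of "(x, \<not>u)"] p flipm_eq[of ?M x u x u] by auto
  qed
  have i2: "\<And>p. flipm ?M (flipm ?M p) = p"
  proof -
    fix p :: node obtain x u where p: "p = (x,u)" by (cases p)
    obtain y v where yv: "?M (x, \<not>u) = (y, v)" by (cases "?M (x, \<not>u)")
    then have "?M (y, v) = (x, \<not> u)" using inv(1) by metis
    then show "flipm ?M (flipm ?M p) = p" using p yv by (simp add: flipm_simp)
  qed
  have i3: "\<And>x s. flipm ?M (x + int n, s) = (fst (flipm ?M (x, s)) + int n, snd (flipm ?M (x, s)))"
    using per by (simp add: flipm_simp)
  have i4: "nc (flipm ?M)" using nc_flip[OF inv(1) nc] .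
  have i5: "nlines (flip D) > 0 \<longrightarrow> \<not> has_vertical (flip D)"
    using nl hv_flip[OF inv(1)] nlines_flip by simp
  show ?thesis unfolding is_affine_diagram_def
  proof (intro conjI)
    show "\<forall>p. match (flip D) p \<noteq> p \<and> match (flip D) (match (flip D) p) = p"
      unfolding match_flip using i1 i2 by blast
    show "\<forall>x s. match (flip D) (x + int n, s) = (fst (match (flip D) (x, s)) + int n, snd (match (flip D) (x, s)))"
      unfolding match_flip using i3 by blast
    show "\<forall>p q. bless p (match (flip D) p) \<and> bless q (match (flip D) q) \<longrightarrow>
        \<not> (bless p q \<and> bless q (match (flip D) p) \<and> bless (match (flip D) p) (match (flip D) q))"
      unfolding match_flip using i4[unfolded nc_def] by blast
  qed (rule i5)
qed

lemma S1_flip: "S1 n (flip D) = S2 n D"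
proof
  fix i
  show "S1 n (flip D) i = S2 n D i"
    unfolding S1_def S2_def S_side_def match_flip flipm_def by simp
qed

locale diag =
  fixes n :: nat and D :: diagram
  assumes aff: "is_affine_diagram n D" and hv: "has_vertical D" and npos: "n > 0"
begin

abbreviation "M \<equiv> match D"
abbreviation "A \<equiv> S1 n D"
abbreviation "vt x \<equiv> \<not> snd (M (x, True))"

lemma inv_neq: "\<forall>p. M p \<noteq> p \<and> M (M p) = p" using aff unfolding is_affine_diagram_def by blast
lemma inv: "M (M p) = p" using inv_neq by blast
lemma neq: "M p \<noteq> p" using inv_neq by blast
lemma sw: "M p = q \<Longrightarrow> M q = p" using inv by metis
lemma per: "M (x + int n, s) = (fst (M (x, s)) + int n, snd (M (x, s)))"
  using aff unfolding is_affine_diagram_def by blast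
lemma ncM: "nc M" using aff unfolding is_affine_diagram_def nc_def by blast
lemma ncs: "ncTT M" "ncTV M" "ncVV M" "ncBV M" "ncBB M" using nc_imp[OF ncM] by auto
lemma nl0: "nlines D = 0" using aff hv unfolding is_affine_diagram_def by auto

lemma perk: "M (x + k * int n, s) = (fst (M (x, s)) + k * int n, snd (M (x, s)))"
proof (induction k rule: int_induct[where k=0])
  case base then show ?case by simp
next
  case (step1 i)
  have "M (x + (i + 1) * int n, s) = M ((x + i * int n) + int n, s)" by (simp add: algebra_simps)
  also have "\<dots> = (fst (M (x + i * int n, s)) + int n, snd (M (x + i * int n, s)))" by (rule per)
  finally show ?case using step1 by (simp add: algebra_simps)
next
  case (step2 i)
  have e0: "(x + (i - 1) * int n) + int n = x + i * int n" by (simp add: algebra_simps)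
  have "M ((x + (i - 1) * int n) + int n, s) = (fst (M (x + (i - 1) * int n, s)) + int n, snd (M (x + (i - 1) * int n, s)))"
    by (rule per)
  then have "(fst (M (x + (i - 1) * int n, s)) + int n, snd (M (x + (i - 1) * int n, s))) = (fst (M (x, s)) + i * int n, snd (M (x, s)))"
    using step2.IH e0 by simp
  then have "fst (M (x + (i - 1) * int n, s)) = fst (M (x, s)) + (i - 1) * int n"
     "snd (M (x + (i - 1) * int n, s)) = snd (M (x, s))" by (auto simp: algebra_simps)
  then show ?case by (intro prod_eqI) simp_all
qed

lemma TTx: "M (u, True) = (v, True) \<Longrightarrow> M (x, True) = (z, True) \<Longrightarrow> u < x \<Longrightarrow> x < v \<Longrightarrow> v < z \<Longrightarrow> False"
proof -
  assume h: "M (u, True) = (v, True)" "M (x, True) = (z, True)" "u < x" "x < v" "v < z"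
  have "M (z, True) = (x, True)" "M (v, True) = (u, True)" using sw[OF h(2)] sw[OF h(1)] by auto
  then show False using ncs(1)[unfolded ncTT_def, rule_format, where a=x and b=z and c=u and d=v] h by auto
qed

lemma arc_short: "M (x, True) = (y, True) \<Longrightarrow> x < y \<Longrightarrow> y < x + int n"
proof (rule ccontr)
  assume h: "M (x, True) = (y, True)" "x < y" "\<not> y < x + int n"
  have my: "M (y, True) = (x, True)" using sw[OF h(1)] .
  have mx: "M (x + int n, True) = (y + int n, True)" using per[of x True] h by simp
  show False
  proof (cases "y = x + int n")
    case True
    then have "M (x + int n, True) = (x, True)" using my by simp
    then show False using mx True npos by simp
  next
    case False
    then have "x + int n < y" using h by simp
    then show False using TTx[OF h(1) mx] h npos by simp
  qed
qed

lemma arc_dist: "M (x, True) = (y, True) \<Longrightarrow> y \<noteq> x \<and> \<bar>y - x\<bar> < int n"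
proof -
  assume h: "M (x, True) = (y, True)"
  have "y \<noteq> x" using h neq by auto
  moreover have "\<bar>y - x\<bar> < int n"
  proof (cases "x < y")
    case True then show ?thesis using arc_short[OF h] by simp
  next
    case False
    then have "y < x" using \<open>y \<noteq> x\<close> by simp
    moreover have "M (y, True) = (x, True)" using sw[OF h] .
    ultimately show ?thesis using arc_short by fastforce
  qed
  ultimately show ?thesis by simp
qed

lemma vt_perk: "vt (x + k * int n) \<longleftrightarrow> vt x" using perk by simp

lemma vt_ex: "\<exists>x. vt x"
proof -
  obtain x where "snd (M (x, False)) = True" using hv unfolding has_vertical_def by blast
  then obtain y where "M (x, False) = (y, True)" by (metis prod.collapse)
  then have "M (y, True) = (x, False)" by (rule sw)
  then show ?thesis by (metis snd_conv)
qed

lemma window: "\<exists>f. vt f \<and> z < f \<and> f \<le> z + int n"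
proof -
  obtain x where x: "vt x" using vt_ex by blast
  define k where "k = (z + int n - x) div int n"
  define r where "r = (z + int n - x) mod int n"
  have e: "z + int n - x = k * int n + r" using k_def r_def by simp
  have r: "0 \<le> r" "r < int n" using r_def npos by auto
  have "vt (x + k * int n)" using vt_perk x by blast
  moreover have "z < x + k * int n" "x + k * int n \<le> z + int n" using e r by linarith+
  ultimately show ?thesis by blast
qed

lemma noF: "M (d, True) = (c, True) \<Longrightarrow> c < x \<Longrightarrow> x < d \<Longrightarrow> \<not> vt x"
proof
  assume h: "M (d, True) = (c, True)" "c < x" "x < d" "vt x"
  obtain y where "M (x, True) = (y, False)" using h(4) by (metis prod.collapse)
  then have "M (y, False) = (x, True)" by (rule sw)
  then show False using ncs(2)[unfolded ncTV_def, rule_format, where c=c and d=d and y=y and x=x] h by auto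
qed

lemma noF': "M (c, True) = (d, True) \<Longrightarrow> c < x \<Longrightarrow> x < d \<Longrightarrow> \<not> vt x"
  using noF[OF sw] by blast

lemma A_val: "i \<in> {1..int n} \<Longrightarrow> A i = (if vt i then i else rr n (fst (M (i, True))))"
  unfolding S1_def S_side_def rr_def by auto

lemma A_out: "i \<notin> {1..int n} \<Longrightarrow> A i = i"
  unfolding S1_def S_side_def by auto

lemma top_of: "\<not> vt x \<Longrightarrow> M (x, True) = (fst (M (x, True)), True)"
  by (metis prod.collapse)

lemma rr_neq: "M (x, True) = (y, True) \<Longrightarrow> rr n y \<noteq> rr n x"
proof
  assume h: "M (x, True) = (y, True)" and e: "rr n y = rr n x"
  define k where "k = qq n x - qq n y"
  have "x = y + k * int n" using rr_eq_iff[OF npos] e k_def by metis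
  moreover have "y \<noteq> x" "\<bar>y - x\<bar> < int n" using arc_dist[OF h] by auto
  ultimately have "k \<noteq> 0" "\<bar>k * int n\<bar> < int n" by auto
  then show False using npos by (simp add: abs_mult)
qed

lemma A_fix: "i \<in> {1..int n} \<Longrightarrow> A i = i \<longleftrightarrow> vt i"
proof -
  assume i: "i \<in> {1..int n}"
  show ?thesis
  proof (cases "vt i")
    case True then show ?thesis using A_val[OF i] by simp
  next
    case False
    then have h: "M (i, True) = (fst (M (i, True)), True)" using top_of by blast
    have "rr n (fst (M (i, True))) \<noteq> rr n i" using rr_neq[OF h] .
    then show ?thesis using A_val[OF i] False rr_id i by auto
  qed
qed

lemma A_rng: "i \<in> {1..int n} \<Longrightarrow> A i \<in> {1..int n}"
  using A_val rr_bounds[OF npos] by auto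

lemma A_inv: "A (A i) = i"
proof (cases "i \<in> {1..int n}")
  case i: True
  show ?thesis
  proof (cases "vt i")
    case True then show ?thesis using A_val[OF i] by simp
  next
    case False
    define y where "y = fst (M (i, True))"
    have h: "M (i, True) = (y, True)" using top_of[OF False] y_def by simp
    have my: "M (y, True) = (i, True)" using sw[OF h] .
    have ry: "rr n y = y + (- qq n y) * int n" using rr_qq[of y n] by simp
    have "M (rr n y, True) = (i + (- qq n y) * int n, True)" using perk[of y "- qq n y" True] my ry by simp
    then have nv: "\<not> vt (rr n y)" and f: "fst (M (rr n y, True)) = i + (- qq n y) * int n" by auto
    have b: "rr n y \<in> {1..int n}" using rr_bounds[OF npos] by auto
    have "A (rr n y) = rr n (i + (- qq n y) * int n)" using A_val[OF b] nv f by simp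
    also have "\<dots> = i"
    proof -
      have e1: "rr n (i + (- qq n y) * int n) = rr n i" by (rule rr_shift)
      have e2: "rr n i = i" using rr_id i by auto
      show ?thesis using e1 e2 by simp
    qed
    finally show ?thesis using A_val[OF i] False y_def by simp
  qed
next
  case False then show ?thesis using A_out by simp
qed

lemma A_invols: "A \<in> invols n"
  unfolding invols_def using A_out A_rng A_inv by auto

lemma fixA: "fixpts n A = {i \<in> {1..int n}. vt i}"
  unfolding fixpts_def using A_fix by auto

lemma fixA_ne: "fixpts n A \<noteq> {}"
proof -
  obtain f where "vt f" "0 < f" "f \<le> int n" using window[of 0] by auto
  then show ?thesis unfolding fixA by auto
qed

lemma isfixA: "isfix n A x \<longleftrightarrow> vt x"
proof -
  have b: "rr n x \<in> {1..int n}" using rr_bounds[OF npos] by auto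
  have "vt x \<longleftrightarrow> vt (rr n x)" using vt_perk[of "rr n x" "qq n x"] rr_qq[of x n] by simp
  then show ?thesis unfolding isfix_def using A_fix[OF b] by simp
qed

lemma cand:
  assumes i: "i \<in> {1..int n}" and nv: "\<not> vt i"
  shows "fst (M (i, True)) = A i \<or> (fst (M (i, True)) = A i - int n \<and> i < A i) \<or>
         (fst (M (i, True)) = A i + int n \<and> A i < i)"
proof -
  define y where "y = fst (M (i, True))"
  have h: "M (i, True) = (y, True)" using top_of[OF nv] y_def by simp
  define j where "j = A i"
  have j: "j \<in> {1..int n}" "j = rr n y" using A_val[OF i] nv j_def y_def A_rng[OF i] by auto
  have qj: "qq n j = 0" using qq_id j by auto
  define k where "k = qq n y"
  have yk: "y = j + k * int n" using rr_eq_iff[OF npos, of j y] j qj rr_id k_def by simp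
  have d: "\<bar>y - i\<bar> < int n" using arc_dist[OF h] by simp
  have bnds: "1 \<le> i" "i \<le> int n" "1 \<le> j" "j \<le> int n" using i j by auto
  have "k \<ge> -1"
  proof (rule ccontr)
    assume "\<not> k \<ge> -1" then have "k \<le> -2" by simp
    then have "k * int n \<le> (-2) * int n" by (rule mult_right_mono) simp
    moreover have "i - y < int n" using d by simp
    ultimately show False using yk bnds by linarith
  qed
  moreover have "k \<le> 1"
  proof (rule ccontr)
    assume "\<not> k \<le> 1" then have "k \<ge> 2" by simp
    then have "2 * int n \<le> k * int n" by (rule mult_right_mono) simp
    moreover have "y - i < int n" using d by simp
    ultimately show False using yk bnds by linarith
  qed
  ultimately have "k = -1 \<or> k = 0 \<or> k = 1" by auto
  then show ?thesis using yk d y_def j_def by auto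
qed

end

context diag
begin

lemma ann: "A \<in> Ann n"
  unfolding Ann_def
proof (rule CollectI, rule conjI)
  show "A \<in> invols n" by (rule A_invols)
  show "\<forall>i j. i \<in> {1..int n} \<and> j \<in> {1..int n} \<and> i < j \<and> A i = j \<longrightarrow>
              A ` {i..j} = {i..j} \<and>
              ({i..j} \<inter> fixpts n A = {} \<or> fixpts n A \<subseteq> {i..j})"
  proof (intro allI impI)
  fix i j assume hij: "i \<in> {1..int n} \<and> j \<in> {1..int n} \<and> i < j \<and> A i = j"
  have i: "i \<in> {1..int n}" and j: "j \<in> {1..int n}" and ij: "i < j" and Ai: "A i = j" using hij by auto
  have bnds: "1 \<le> i" "i \<le> int n" "1 \<le> j" "j \<le> int n" using i j by auto
  have nvi: "\<not> vt i" using A_fix[OF i] Ai ij by auto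
  have Aj: "A j = i" using A_inv[of i] Ai by simp
  have nvj: "\<not> vt j" using A_fix[OF j] Aj ij by auto
  define y where "y = fst (M (i, True))"
  have hy: "M (i, True) = (y, True)" using top_of[OF nvi] y_def by simp
  have c: "y = j \<or> y = j - int n" using cand[OF i nvi] Ai ij y_def by auto
  have surj_from_sub: "A ` {i..j} = {i..j}" if sub: "\<forall>x\<in>{i..j}. A x \<in> {i..j}"
  proof
    show "A ` {i..j} \<subseteq> {i..j}" using sub by blast
    show "{i..j} \<subseteq> A ` {i..j}"
    proof
      fix x assume "x \<in> {i..j}"
      then have "A x \<in> {i..j}" "A (A x) = x" using sub A_inv by auto
      then show "x \<in> A ` {i..j}" by (metis image_eqI)
    qed
  qed
  show "A ` {i..j} = {i..j} \<and> ({i..j} \<inter> fixpts n A = {} \<or> fixpts n A \<subseteq> {i..j})"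
  proof (cases "y = j")
    case True
    have h: "M (i, True) = (j, True)" using hy True by simp
    have h': "M (j, True) = (i, True)" using sw[OF h] .
    have sub: "\<forall>x\<in>{i..j}. A x \<in> {i..j}"
    proof
      fix x assume x: "x \<in> {i..j}"
      show "A x \<in> {i..j}"
      proof (cases "x = i \<or> x = j")
        case True then show ?thesis using Ai Aj ij by auto
      next
        case False
        then have x2: "i < x" "x < j" using x by auto
        have xb: "x \<in> {1..int n}" using x2 bnds by auto
        have nvx: "\<not> vt x" using noF'[OF h x2] .
        define z where "z = fst (M (x, True))"
        have hx: "M (x, True) = (z, True)" using top_of[OF nvx] z_def by simp
        have hz: "M (z, True) = (x, True)" using sw[OF hx] .
        have "z \<noteq> i" using hz h x2 by auto
        moreover have "z \<noteq> j" using hz h' x2 by auto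
        moreover have "\<not> z < i" using TTx[OF hz h] x2 by auto
        moreover have "\<not> j < z" using TTx[OF h hx] x2 by auto
        ultimately have zz: "i < z" "z < j" by auto
        have "A x = rr n z" using A_val[OF xb] nvx z_def by simp
        also have "\<dots> = z" using rr_id zz bnds by simp
        finally show ?thesis using zz by simp
      qed
    qed
    have "{i..j} \<inter> fixpts n A = {}"
    proof (rule ccontr)
      assume "{i..j} \<inter> fixpts n A \<noteq> {}"
      then obtain f where f0: "f \<in> {i..j}" "f \<in> fixpts n A" by blast
      then have f: "f \<in> {i..j}" "vt f" unfolding fixA by auto
      then have "i < f" "f < j" using nvi nvj by (auto simp: le_less)
      then show False using noF'[OF h] f by blast
    qed
    then show ?thesis using surj_from_sub[OF sub] by simp
  next
    case False
    then have yj: "y = j - int n" using c by simp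
    have h: "M (i, True) = (j - int n, True)" using hy yj by simp
    have h': "M (j - int n, True) = (i, True)" using sw[OF h] .
    have h'': "M (j, True) = (i + int n, True)" using per[of "j - int n" True] h' by simp
    have h3: "M (i + int n, True) = (j, True)" using sw[OF h''] .
    have sub: "\<forall>x\<in>{i..j}. A x \<in> {i..j}"
    proof
      fix x assume x: "x \<in> {i..j}"
      show "A x \<in> {i..j}"
      proof (cases "x = i \<or> x = j")
        case True then show ?thesis using Ai Aj ij by auto
      next
        case False
        then have x2: "i < x" "x < j" using x by auto
        have xb: "x \<in> {1..int n}" using x2 bnds by auto
        show ?thesis
        proof (cases "vt x")
          case True then show ?thesis using A_val[OF xb] x by simp
        next
          case nvx: False
          define z where "z = fst (M (x, True))"
          have hx: "M (x, True) = (z, True)" using top_of[OF nvx] z_def by simp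
          have hz: "M (z, True) = (x, True)" using sw[OF hx] .
          have dz: "\<bar>z - x\<bar> < int n" using arc_dist[OF hx] by simp
          have "z \<noteq> j - int n" using hz h' x2 by auto
          moreover have "z \<noteq> i" using hz h x2 bnds by auto
          moreover have "z \<noteq> j" using hz h'' x2 bnds by auto
          moreover have "z \<noteq> i + int n" using hz h3 x2 by auto
          moreover have "\<not> (j - int n < z \<and> z < i)" using TTx[OF h' hz] x2 by auto
          moreover have "\<not> (j < z \<and> z < i + int n)" using TTx[OF hx h''] x2 by auto
          ultimately have zc: "(i - int n < z \<and> z < j - int n) \<or> (i < z \<and> z < j) \<or> (i + int n < z \<and> z < j + int n)"
            using dz x2 by auto
          have rz: "i < rr n z \<and> rr n z < j"
          proof -
            { assume a: "i - int n < z \<and> z < j - int n"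
              have "rr n z = rr n (z + 1 * int n)" using rr_shift[of n z 1] by simp
              also have "\<dots> = z + int n" using rr_id a bnds by simp
              finally have ?thesis using a by simp }
            moreover
            { assume a: "i < z \<and> z < j"
              have ?thesis using rr_id a bnds by simp }
            moreover
            { assume a: "i + int n < z \<and> z < j + int n"
              have "rr n z = rr n ((z - int n) + 1 * int n)" by simp
              also have "\<dots> = rr n (z - int n)" by (rule rr_shift)
              also have "\<dots> = z - int n" using rr_id a bnds by simp
              finally have ?thesis using a by simp }
            ultimately show ?thesis using zc by blast
          qed
          have "A x = rr n z" using A_val[OF xb] nvx z_def by simp
          then show ?thesis using rz by simp
        qed
      qed
    qed
    have "fixpts n A \<subseteq> {i..j}"
    proof
      fix f assume "f \<in> fixpts n A"
      then have f: "1 \<le> f" "f \<le> int n" "vt f" unfolding fixA by auto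
      have "\<not> f < i"
      proof
        assume "f < i"
        then show False using noF'[OF h', of f] f bnds by simp
      qed
      moreover have "\<not> j < f"
      proof
        assume "j < f"
        have "vt (f + (-1) * int n)" using vt_perk f by blast
        then show False using noF'[OF h', of "f - int n"] f bnds \<open>j < f\<close> by simp
      qed
      ultimately show "f \<in> {i..j}" by simp
    qed
    then show ?thesis using surj_from_sub[OF sub] by simp
  qed
  qed
qed

lemma pbase_eq:
  assumes i: "i \<in> {1..int n}" and nvi: "\<not> vt i"
  shows "fst (M (i, True)) = pbase n A i"
proof -
  define j where "j = A i"
  have j: "j \<in> {1..int n}" using A_rng[OF i] j_def by simp
  have bnds: "1 \<le> i" "i \<le> int n" "1 \<le> j" "j \<le> int n" using i j by auto
  have ji: "j \<noteq> i" using A_fix[OF i] nvi j_def by simp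
  have Aj: "A j = i" using A_inv[of i] j_def by simp
  have nvj: "\<not> vt j" using A_fix[OF j] Aj ji by auto
  define y where "y = fst (M (i, True))"
  have hy: "M (i, True) = (y, True)" using top_of[OF nvi] y_def by simp
  have c: "y = j \<or> (y = j - int n \<and> i < j) \<or> (y = j + int n \<and> j < i)" using cand[OF i nvi] j_def y_def by simp
  moreover
  { assume yj: "y = j"
    have h: "M (i, True) = (j, True)" using hy yj by simp
    have h': "M (j, True) = (i, True)" using sw[OF h] .
    have "\<forall>f\<in>{min i j..max i j}. A f \<noteq> f"
    proof
      fix f assume f: "f \<in> {min i j..max i j}"
      show "A f \<noteq> f"
      proof
        assume Af: "A f = f"
        have fb: "f \<in> {1..int n}" using f bnds by (auto simp: min_def max_def split: if_splits)
        have vf: "vt f" using A_fix[OF fb] Af by simp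
        have "f \<noteq> i" "f \<noteq> j" using vf nvi nvj by auto
        then show False
          using noF'[OF h, of f] noF'[OF h', of f] f vf by (auto simp: min_def max_def split: if_splits)
      qed
    qed
    then have ?thesis unfolding pbase_def using yj y_def j_def by simp }
  moreover
  { assume yj: "y = j - int n \<and> i < j"
    have h: "M (i, True) = (j - int n, True)" using hy yj by simp
    have h': "M (j - int n, True) = (i, True)" using sw[OF h] .
    obtain f where f: "vt f" "j - int n < f" "f \<le> j" using window[of "j - int n"] by auto
    have "f \<noteq> j" using f nvj by auto
    moreover have "\<not> (j - int n < f \<and> f < i)" using noF'[OF h'] f by blast
    moreover have "f \<noteq> i" using f nvi by auto
    ultimately have fi: "i < f" "f < j" using f by auto
    have fb: "f \<in> {1..int n}" using fi bnds by auto
    have "A f = f" using A_fix[OF fb] f by simp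
    then have neg: "\<not> (\<forall>f\<in>{min i (A i)..max i (A i)}. A f \<noteq> f)" using fi j_def by auto
    have lt: "i < A i" using yj j_def by simp
    have "pbase n A i = A i - int n" by (simp only: pbase_def if_not_P[OF neg] if_P[OF lt] if_False)
    then have ?thesis using yj y_def j_def by simp }
  moreover
  { assume yj: "y = j + int n \<and> j < i"
    have h: "M (i, True) = (j + int n, True)" using hy yj by simp
    obtain f where f: "vt f" "j < f" "f \<le> j + int n" using window[of j] by auto
    have "\<not> vt (j + 1 * int n)" using vt_perk nvj by blast
    then have "f \<noteq> j + int n" using f by auto
    moreover have "\<not> (i < f \<and> f < j + int n)" using noF'[OF h] f by blast
    moreover have "f \<noteq> i" using f nvi by auto
    ultimately have fi: "j < f" "f < i" using f by auto
    have fb: "f \<in> {1..int n}" using fi bnds by auto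
    have "A f = f" using A_fix[OF fb] f by simp
    then have neg: "\<not> (\<forall>f\<in>{min i (A i)..max i (A i)}. A f \<noteq> f)" using fi j_def by auto
    have lt: "\<not> i < A i" using yj j_def by simp
    have "pbase n A i = A i + int n" by (simp only: pbase_def if_not_P[OF neg] if_not_P[OF lt] if_False)
    then have ?thesis using yj y_def j_def by simp }
  ultimately show ?thesis by blast
qed

lemma partner_eq: "\<not> vt x \<Longrightarrow> M (x, True) = (partner n A x, True)"
proof -
  assume nv: "\<not> vt x"
  let ?i = "rr n x" let ?q = "qq n x"
  have b: "?i \<in> {1..int n}" using rr_bounds[OF npos] by auto
  have x: "x = ?i + ?q * int n" using rr_qq by metis
  have nvi: "\<not> vt ?i" using vt_perk[of ?i ?q] x nv by simp
  have "M (x, True) = (fst (M (?i, True)) + ?q * int n, snd (M (?i, True)))"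
    using perk[of ?i ?q True] x by simp
  also have "\<dots> = (pbase n A ?i + ?q * int n, True)" using pbase_eq[OF b nvi] nvi by simp
  finally show ?thesis unfolding partner_def .
qed

end

lemma transl:
  fixes g :: "int \<Rightarrow> int"
  assumes mono: "\<And>k k'. k < k' \<Longrightarrow> g k < g k'" and surj: "\<And>m. \<exists>k. g k = m"
  shows "g k = k + g 0"
proof -
  have step: "g (k + 1) = g k + 1" for k
  proof (rule ccontr)
    assume ne: "g (k + 1) \<noteq> g k + 1"
    have "g k < g (k + 1)" using mono by simp
    then have lt: "g k + 1 < g (k + 1)" using ne by simp
    obtain j where j: "g j = g k + 1" using surj by blast
    have "k < j" using mono[of j k] j by (cases "j \<le> k") (auto simp: le_less)
    moreover have "j < k + 1" using mono[of "k+1" j] j lt by (cases "k + 1 \<le> j") (auto simp: le_less)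
    ultimately show False by simp
  qed
  show ?thesis
  proof (induction k rule: int_induct[where k=0])
    case base then show ?case by simp
  next
    case (step1 i) then show ?case using step[of i] by simp
  next
    case (step2 i) then show ?case using step[of "i - 1"] by simp
  qed
qed

context diag
begin

lemma diag_flip: "diag n (flip D)"
  using affine_flip[OF aff] hv_flip[of D] inv hv npos unfolding diag_def by blast

abbreviation "B \<equiv> S2 n D"

lemma FA: "S1 n (flip D) = B" using S1_flip .

lemma Fvt: "(\<not> snd (match (flip D) (y, True))) \<longleftrightarrow> snd (M (y, False))"
  unfolding match_flip flipm_def by simp

lemma annB: "B \<in> Ann n" using diag.ann[OF diag_flip] FA by simp
lemma fixB_ne: "fixpts n B \<noteq> {}" using diag.fixA_ne[OF diag_flip] FA by simp
lemma isfixB: "isfix n B y \<longleftrightarrow> snd (M (y, False))" using diag.isfixA[OF diag_flip] FA Fvt by simp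
lemma partner_eqB: "\<not> snd (M (y, False)) \<Longrightarrow> M (y, False) = (partner n B y, False)"
proof -
  assume h: "\<not> snd (M (y, False))"
  have "match (flip D) (y, True) = (partner n B y, True)" using diag.partner_eq[OF diag_flip, of y] h Fvt FA by simp
  then show ?thesis unfolding match_flip flipm_def by (cases "M (y, False)") auto
qed

lemma annA_A: "annA n A" unfolding annA_def using ann fixA_ne by simp
lemma annA_B: "annA n B" unfolding annA_def using annB fixB_ne by simp

interpretation EA: enumset n "fixpts n A" using annA_enumset annA_A .
interpretation EB: enumset n "fixpts n B" using annA_enumset annA_B .

abbreviation "a \<equiv> enum n (fixpts n A)"
abbreviation "b \<equiv> enum n (fixpts n B)"
abbreviation "ai \<equiv> einv n (fixpts n A)"
abbreviation "bi \<equiv> einv n (fixpts n B)"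

lemma isfixA': "isfix n A x \<longleftrightarrow> vt x" by (rule isfixA)

lemma a_vt: "vt (a k)" using isfixA annA.isfix_rr[OF annA_A] EA.en_in by blast
lemma a_ai: "vt x \<Longrightarrow> a (ai x) = x" using isfixA annA.isfix_rr[OF annA_A] EA.en_einv by blast
lemma b_fix: "snd (M (b k, False))" using isfixB annA.isfix_rr[OF annA_B] EB.en_in by blast
lemma b_bi: "snd (M (y, False)) \<Longrightarrow> b (bi y) = y" using isfixB annA.isfix_rr[OF annA_B] EB.en_einv by blast

definition phi :: "int \<Rightarrow> int" where "phi x = fst (M (x, True))"

lemma vt_M: "vt x \<Longrightarrow> M (x, True) = (phi x, False)"
  unfolding phi_def by (metis prod.collapse)
lemma vt_M': "vt x \<Longrightarrow> M (phi x, False) = (x, True)"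
  using vt_M sw by blast
lemma phi_fix: "vt x \<Longrightarrow> snd (M (phi x, False))" using vt_M' by simp

definition g :: "int \<Rightarrow> int" where "g k = bi (phi (a k))"

lemma b_g: "b (g k) = phi (a k)" unfolding g_def using b_bi phi_fix a_vt by blast

lemma g_mono: "k < k' \<Longrightarrow> g k < g k'"
proof -
  assume kk: "k < k'"
  have ak: "a k < a k'" using EA.en_less_iff kk by blast
  have m1: "M (phi (a k), False) = (a k, True)" using vt_M' a_vt by blast
  have m2: "M (phi (a k'), False) = (a k', True)" using vt_M' a_vt by blast
  have "phi (a k) \<noteq> phi (a k')" using m1 m2 ak by auto
  moreover have "\<not> phi (a k') < phi (a k)"
    using ncs(3)[unfolded ncVV_def, rule_format, where y="phi (a k')" and x="a k'" and y'="phi (a k)" and x'="a k"] m1 m2 ak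
    by auto
  ultimately have "b (g k) < b (g k')" using b_g by simp
  then show ?thesis using EB.en_less_iff by blast
qed

lemma g_surj: "\<exists>k. g k = m"
proof -
  have f: "snd (M (b m, False))" using b_fix .
  obtain x where x: "M (b m, False) = (x, True)" using f by (metis prod.collapse)
  have mx: "M (x, True) = (b m, False)" using sw[OF x] .
  then have vx: "vt x" by simp
  have "phi x = b m" using mx unfolding phi_def by simp
  then have "g (ai x) = m" unfolding g_def using a_ai[OF vx] EB.einv_en by simp
  then show ?thesis by blast
qed

lemma g_tr: "g k = k + g 0" using transl[of g] g_mono g_surj by blast

lemma phi_per: "vt x \<Longrightarrow> phi (x + int n) = phi x + int n"
  unfolding phi_def using per by simp

lemma teq: "card (fixpts n A) = card (fixpts n B)"
proof -
  define tA where "tA = int (card (fixpts n A))"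
  define tB where "tB = int (card (fixpts n B))"
  have "b (g tA) = phi (a tA)" by (rule b_g)
  also have "\<dots> = phi (a 0 + int n)" using EA.en_shift[of 0] tA_def by simp
  also have "\<dots> = phi (a 0) + int n" using phi_per a_vt by blast
  also have "\<dots> = b (g 0) + int n" using b_g by simp
  also have "\<dots> = b (g 0 + tB)" using EB.en_shift tB_def by simp
  finally have "g tA = g 0 + tB" using EB.en_inj by blast
  then have "tA = tB" using g_tr[of tA] by simp
  then show ?thesis using tA_def tB_def by simp
qed

lemma good: "goodAB n A B"
  unfolding goodAB_def goodAB_axioms_def using annA_A annA_B teq by simp

lemma match_mk: "M = mkm n A B (- g 0)"
proof
  fix p :: node
  obtain x u where p: "p = (x, u)" by (cases p)
  show "M p = mkm n A B (- g 0) p"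
  proof (cases u)
    case True
    show ?thesis
    proof (cases "vt x")
      case vx: True
      have "M (x, True) = (phi x, False)" using vt_M[OF vx] .
      moreover have "phi x = b (ai x - (- g 0))"
        using b_g[of "ai x"] g_tr[of "ai x"] a_ai[OF vx] by simp
      ultimately show ?thesis using p True vx isfixA unfolding mkm_def by simp
    next
      case False
      then show ?thesis using p True partner_eq[OF False] isfixA unfolding mkm_def by simp
    qed
  next
    case False
    show ?thesis
    proof (cases "snd (M (x, False))")
      case fx: True
      obtain y where y: "M (x, False) = (y, True)" using fx by (metis prod.collapse)
      have my: "M (y, True) = (x, False)" using sw[OF y] .
      then have vy: "vt y" by simp
      have "phi y = x" using my unfolding phi_def by simp
      then have "b (g (ai y)) = x" using b_g a_ai[OF vy] by metis
      then have "g (ai y) = bi x" using EB.einv_en by metis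
      then have "ai y = bi x + (- g 0)" using g_tr[of "ai y"] by simp
      then have "y = a (bi x + (- g 0))" using a_ai[OF vy] by metis
      then show ?thesis using p False y fx isfixB unfolding mkm_def by simp
    next
      case nf: False
      then show ?thesis using p False partner_eqB[OF nf] isfixB unfolding mkm_def by simp
    qed
  qed
qed

lemma D_mk: "D = mk n A B (- g 0)"
proof -
  have "D = (M, nlines D)" unfolding match_def nlines_def by simp
  then show ?thesis unfolding mk_def using match_mk nl0 by simp
qed

lemma struct_main: "goodAB n A B \<and> D = mk n A B (wind D)"
proof -
  have "wind D = - g 0" using D_mk goodAB.mk_wind[OF good] by metis
  then show ?thesis using good D_mk by simp
qed

end

lemma inv_even:
  assumes "finite X" and "\<forall>x\<in>X. S x \<in> X \<and> S x \<noteq> x \<and> S (S x) = x"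
  shows "even (card X)"
  using assms
proof (induction "card X" arbitrary: X rule: less_induct)
  case less
  show ?case
  proof (cases "X = {}")
    case True then show ?thesis by simp
  next
    case False
    then obtain x where x: "x \<in> X" by blast
    have sx: "S x \<in> X" "S x \<noteq> x" "S (S x) = x" using less.prems x by auto
    define X' where "X' = X - {x, S x}"
    have fin': "finite X'" using less.prems X'_def by simp
    have cX: "card X = card X' + 2"
    proof -
      have "{x, S x} \<subseteq> X" using x sx by auto
      moreover have "card {x, S x} = 2" using sx by simp
      ultimately show ?thesis unfolding X'_def using less.prems(1)
        by (metis card_Diff_subset card_mono finite_subset le_add_diff_inverse2 add.commute)
    qed
    have pr: "\<forall>y\<in>X'. S y \<in> X' \<and> S y \<noteq> y \<and> S (S y) = y"
    proof
      fix y assume y: "y \<in> X'"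
      then have yX: "y \<in> X" "y \<noteq> x" "y \<noteq> S x" unfolding X'_def by auto
      have "S y \<in> X" "S y \<noteq> y" "S (S y) = y" using less.prems yX by auto
      moreover have "S y \<noteq> x" using yX sx \<open>S (S y) = y\<close> by metis
      moreover have "S y \<noteq> S x" using yX sx \<open>S (S y) = y\<close> by metis
      ultimately show "S y \<in> X' \<and> S y \<noteq> y \<and> S (S y) = y" unfolding X'_def by auto
    qed
    have "even (card X')" using less.hyps[of X'] cX fin' pr by simp
    then show ?thesis using cX by simp
  qed
qed

lemma fix_even:
  assumes "A \<in> invols n" "even n"
  shows "even (card (fixpts n A))"
proof -
  let ?F = "fixpts n A" let ?N = "{1..int n} - fixpts n A"
  have sub: "?F \<subseteq> {1..int n}" unfolding fixpts_def by auto
  have finF: "finite ?F" using sub finite_subset by blast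
  have c1: "card ?N = card {1..int n} - card ?F" using card_Diff_subset[OF finF sub] .
  have c2: "card {1..int n} = n" by simp
  have c3: "card ?F \<le> card {1..int n}" using sub by (intro card_mono) auto
  have c: "card ?N + card ?F = n" using c1 c2 c3 by simp
  have "even (card ?N)"
  proof (rule inv_even)
    show "finite ?N" by simp
    show "\<forall>x\<in>?N. A x \<in> ?N \<and> A x \<noteq> x \<and> A (A x) = x"
    proof
      fix x assume x: "x \<in> ?N"
      then have xb: "x \<in> {1..int n}" and nf: "A x \<noteq> x" unfolding fixpts_def by auto
      have r: "A x \<in> {1..int n}" "A (A x) = A x \<longrightarrow> False" "A (A x) = x"
        using assms(1) xb nf unfolding invols_def by auto
      then show "A x \<in> ?N \<and> A x \<noteq> x \<and> A (A x) = x" unfolding fixpts_def using nf by auto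
    qed
  qed
  moreover have "even (card ?N + card ?F)" using c assms(2) by simp
  ultimately show ?thesis by simp
qed

context goodAB
begin

lemma bracket_mk: "bracket n A B w = mk n A B w"
  unfolding bracket_def
proof (rule the_equality)
  show "is_affine_diagram n (mk n A B w) \<and> has_vertical (mk n A B w) \<and>
        S1 n (mk n A B w) = A \<and> S2 n (mk n A B w) = B \<and> wind (mk n A B w) = w"
    using mk_affine mk_vert mk_S1 mk_S2 mk_wind by simp
next
  fix D assume h: "is_affine_diagram n D \<and> has_vertical D \<and> S1 n D = A \<and> S2 n D = B \<and> wind D = w"
  have "diag n D" unfolding diag_def using h npos by simp
  then have "D = mk n (S1 n D) (S2 n D) (wind D)" using diag.struct_main by blast
  then show "D = mk n A B w" using h by simp
qed

lemma rmin_par: "even (int (cAB n A B) + rmin n A B)"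
proof -
  define P where "P r = in_O (bracket n A B (int r))" for r :: nat
  have P: "P r \<longleftrightarrow> even (int (cAB n A B) + int r)" for r
    unfolding P_def bracket_mk mk_inO by simp
  define r0 :: nat where "r0 = (if even (cAB n A B) then 0 else 1)"
  have "P r0" using P r0_def by simp
  then have "P (LEAST r. P r)" by (rule LeastI)
  then show ?thesis unfolding rmin_def P_def[symmetric] using P by simp
qed

end

lemma good_of_triple:
  assumes "t \<in> {2..n}" "A \<in> Ann n \<inter> Inv n t" "B \<in> Ann n \<inter> Inv n t"
  shows "goodAB n A B"
proof -
  have cA: "card (fixpts n A) = t" and cB: "card (fixpts n B) = t" using assms unfolding Inv_def by auto
  have "fixpts n A \<noteq> {}" using cA assms(1) by auto
  moreover have "fixpts n B \<noteq> {}" using cB assms(1) by auto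
  ultimately show ?thesis unfolding goodAB_def goodAB_axioms_def annA_def using assms cA cB by auto
qed

lemma triple_of_good:
  assumes "goodAB n A B" "even n"
  shows "\<exists>t. t \<in> {2..n} \<and> even t \<and> A \<in> Ann n \<inter> Inv n t \<and> B \<in> Ann n \<inter> Inv n t"
proof -
  interpret goodAB n A B by (rule assms(1))
  define t where "t = card (fixpts n A)"
  have AA: "A \<in> Ann n" "B \<in> Ann n" using A.AAnn B.AAnn by auto
  have invA: "A \<in> invols n" using AA unfolding Ann_def by auto
  have invB: "B \<in> invols n" using AA unfolding Ann_def by auto
  have ev: "even t" using fix_even[OF invA assms(2)] t_def by simp
  have pos: "t > 0" using EA.cpos t_def by simp
  have "t \<le> card {1..int n}" unfolding t_def using EA.E_sub by (intro card_mono) auto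
  then have le: "t \<le> n" by simp
  have "t \<ge> 2" using ev pos by presburger
  moreover have "A \<in> Inv n t" "B \<in> Inv n t" unfolding Inv_def using invA invB t_def teq by auto
  ultimately show ?thesis using ev le AA by auto
qed

theorem lemma3p5p1:
  fixes n :: nat
  assumes "n \<ge> 4" and "even n"
  shows "{D. is_affine_diagram n D \<and> has_vertical D \<and> in_O D} =
           {bracket n A B (rmin n A B + w) | A B w t.
              t \<in> {2..n} \<and> even t \<and> A \<in> Ann n \<inter> Inv n t \<and> B \<in> Ann n \<inter> Inv n t \<and> even w} \<and>
         inj_on (\<lambda>(A, B, w). bracket n A B (rmin n A B + w))
           {(A, B, w). \<exists>t. t \<in> {2..n} \<and> even t \<and> A \<in> Ann n \<inter> Inv n t \<and>
                           B \<in> Ann n \<inter> Inv n t \<and> even w}"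
proof (intro conjI)
  have npos: "n > 0" using assms by simp
  show "{D. is_affine_diagram n D \<and> has_vertical D \<and> in_O D} =
           {bracket n A B (rmin n A B + w) | A B w t.
              t \<in> {2..n} \<and> even t \<and> A \<in> Ann n \<inter> Inv n t \<and> B \<in> Ann n \<inter> Inv n t \<and> even w}"
  proof (intro equalityI subsetI)
    fix D assume "D \<in> {D. is_affine_diagram n D \<and> has_vertical D \<and> in_O D}"
    then have h: "is_affine_diagram n D" "has_vertical D" "in_O D" by auto
    have dg: "diag n D" unfolding diag_def using h npos by simp
    let ?A = "S1 n D" let ?B = "S2 n D" let ?W = "wind D"
    have g: "goodAB n ?A ?B" and De: "D = mk n ?A ?B ?W" using diag.struct_main[OF dg] by auto
    have e1: "even (int (cAB n ?A ?B) + ?W)" using h(3) De goodAB.mk_inO[OF g] by metis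
    have e2: "even (int (cAB n ?A ?B) + rmin n ?A ?B)" using goodAB.rmin_par[OF g] .
    define w where "w = ?W - rmin n ?A ?B"
    have ew: "even w" using e1 e2 w_def by presburger
    have "D = bracket n ?A ?B (rmin n ?A ?B + w)" using De goodAB.bracket_mk[OF g] w_def by simp
    moreover obtain t where "t \<in> {2..n} \<and> even t \<and> ?A \<in> Ann n \<inter> Inv n t \<and> ?B \<in> Ann n \<inter> Inv n t"
      using triple_of_good[OF g assms(2)] by blast
    ultimately show "D \<in> {bracket n A B (rmin n A B + w) | A B w t.
              t \<in> {2..n} \<and> even t \<and> A \<in> Ann n \<inter> Inv n t \<and> B \<in> Ann n \<inter> Inv n t \<and> even w}"
      using ew by blast
  next
    fix D assume "D \<in> {bracket n A B (rmin n A B + w) | A B w t.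
              t \<in> {2..n} \<and> even t \<and> A \<in> Ann n \<inter> Inv n t \<and> B \<in> Ann n \<inter> Inv n t \<and> even w}"
    then obtain A B w t where D: "D = bracket n A B (rmin n A B + w)" and
      ht: "t \<in> {2..n}" "A \<in> Ann n \<inter> Inv n t" "B \<in> Ann n \<inter> Inv n t" and ew: "even w" by blast
    have g: "goodAB n A B" using good_of_triple[OF ht] .
    have De: "D = mk n A B (rmin n A B + w)" using D goodAB.bracket_mk[OF g] by simp
    have "even (int (cAB n A B) + rmin n A B)" using goodAB.rmin_par[OF g] .
    then have "even (int (cAB n A B) + (rmin n A B + w))" using ew by presburger
    then have "in_O D" using De goodAB.mk_inO[OF g] by simp
    moreover have "is_affine_diagram n D" "has_vertical D" using De goodAB.mk_affine[OF g] goodAB.mk_vert[OF g] by auto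
    ultimately show "D \<in> {D. is_affine_diagram n D \<and> has_vertical D \<and> in_O D}" by simp
  qed
  show "inj_on (\<lambda>(A, B, w). bracket n A B (rmin n A B + w))
           {(A, B, w). \<exists>t. t \<in> {2..n} \<and> even t \<and> A \<in> Ann n \<inter> Inv n t \<and>
                           B \<in> Ann n \<inter> Inv n t \<and> even w}"
  proof (rule inj_onI)
    fix p q
    assume p: "p \<in> {(A, B, w). \<exists>t. t \<in> {2..n} \<and> even t \<and> A \<in> Ann n \<inter> Inv n t \<and>
                           B \<in> Ann n \<inter> Inv n t \<and> even w}"
      and q: "q \<in> {(A, B, w). \<exists>t. t \<in> {2..n} \<and> even t \<and> A \<in> Ann n \<inter> Inv n t \<and>
                           B \<in> Ann n \<inter> Inv n t \<and> even w}"
      and eq: "(\<lambda>(A, B, w). bracket n A B (rmin n A B + w)) p = (\<lambda>(A, B, w). bracket n A B (rmin n A B + w)) q"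
    obtain A B w where pe: "p = (A, B, w)" by (cases p) auto
    obtain A' B' w' where qe: "q = (A', B', w')" by (cases q) auto
    obtain t where t: "t \<in> {2..n}" "A \<in> Ann n \<inter> Inv n t" "B \<in> Ann n \<inter> Inv n t" using p pe by auto
    obtain t' where t': "t' \<in> {2..n}" "A' \<in> Ann n \<inter> Inv n t'" "B' \<in> Ann n \<inter> Inv n t'" using q qe by auto
    have g: "goodAB n A B" using good_of_triple[OF t] .
    have g': "goodAB n A' B'" using good_of_triple[OF t'] .
    have e: "mk n A B (rmin n A B + w) = mk n A' B' (rmin n A' B' + w')"
      using eq pe qe goodAB.bracket_mk[OF g] goodAB.bracket_mk[OF g'] by simp
    have AA: "A = A'" using goodAB.mk_S1[OF g] goodAB.mk_S1[OF g'] e by metis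
    have BB: "B = B'" using goodAB.mk_S2[OF g] goodAB.mk_S2[OF g'] e by metis
    have "rmin n A B + w = rmin n A' B' + w'" using goodAB.mk_wind[OF g] goodAB.mk_wind[OF g'] e by metis
    then have "w = w'" using AA BB by simp
    then show "p = q" using pe qe AA BB by simp
  qed
qed

end
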